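(* Let $d,J\in\mathbb{N}^+$, let $E_1,\dots,E_J\subseteq\mathbb{R}^d$ be pairwise disjoint bounded closed sets, $E=\bigcup_{j=1}^J E_j$, and let $N\ge 36d(2d+1)$, $L\ge 12$ be integers. Then $\mathscr{C}_d(E_1,\dots,E_J)|_E\subseteq\mathscr{H}_d(N,L)|_E$.
   Context: For a set $\mathscr{F}$ of functions, $\mathscr{F}|_E=\{f|_E: f\in\mathscr{F}\}$ where $f|_E$ is the restriction to $E$. $\mathscr{C}_d(E_1,\dots,E_J)=\{\sum_{j=1}^J r_j\mathbb{1}_{E_j}: r_1,\dots,r_J\in\mathbb{Q}\}$ with $\mathbb{1}_E$ the indicator of $E$. Let $\sigma_1:\mathbb{R}\to\mathbb{R}$ be the continuous triangular-wave function of period $2$: $\sigma_1(x)=|x|$ for $x\in[-1,1]$, $\sigma_1(x+2)=\sigma_1(x)$. Let $\sigma_2(x)=x/(|x|+1)$. The activation function is $\sigma(x)=\sigma_1(x)$ for $x\ge0$ and $\sigma(x)=\sigma_2(x)$ for $x<0$, applied entrywise. $\mathscr{H}_d(N,L)$ is the set of all functions $\phi:\mathbb{R}^d\to\mathbb{R}$ of the form $\phi=\mathcal{L}_L\circ\sigma\circ\mathcal{L}_{L-1}\circ\cdots\circ\sigma\circ\mathcal{L}_0$, where $\mathcal{L}_0:\mathbb{R}^d\to\mathbb{R}^N$, $\mathcal{L}_i:\mathbb{R}^N\to\mathbb{R}^N$ ($1\le i\le L-1$), $\mathcal{L}_L:\mathbb{R}^N\to\mathbb{R}$ are arbitrary affine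 maps. *)

theory Defs
  imports "HOL-Analysis.Analysis" "HOL-Library.FuncSet"
begin

text \<open>Triangular wave of period 2: equals abs x on [-1,1].\<close>
definition sigma1 :: "real \<Rightarrow> real" where
  "sigma1 x = \<bar>x - 2 * of_int \<lfloor>(x + 1) / 2\<rfloor>\<bar>"

definition sigma2 :: "real \<Rightarrow> real" where
  "sigma2 x = x / (\<bar>x\<bar> + 1)"

definition act :: "real \<Rightarrow> real" where
  "act x = (if x \<ge> 0 then sigma1 x else sigma2 x)"

text \<open>Vectors in R^N (N a natural number) are represented as nat => real,
  with entries of index >= N equal to 0.\<close>
definition act_vec :: "nat \<Rightarrow> (nat \<Rightarrow> real) \<Rightarrow> (nat \<Rightarrow> real)" where
  "act_vec N h = (\<lambda>i. if i < N then act (h i) else 0)"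

definition affine_NN :: "nat \<Rightarrow> (nat \<Rightarrow> nat \<Rightarrow> real) \<Rightarrow> (nat \<Rightarrow> real) \<Rightarrow> (nat \<Rightarrow> real) \<Rightarrow> (nat \<Rightarrow> real)" where
  "affine_NN N W b h = (\<lambda>i. if i < N then (\<Sum>j<N. W i j * h j) + b i else 0)"

definition affine_in :: "nat \<Rightarrow> (nat \<Rightarrow> 'd::finite \<Rightarrow> real) \<Rightarrow> (nat \<Rightarrow> real) \<Rightarrow> real^'d \<Rightarrow> (nat \<Rightarrow> real)" where
  "affine_in N W b x = (\<lambda>i. if i < N then (\<Sum>j\<in>UNIV. W i j * x $ j) + b i else 0)"

text \<open>hidden k x = output of (k+1)-th activation layer:
  sigma o L_k o ... o sigma o L_0.\<close>
fun hidden :: "nat \<Rightarrow> (nat \<Rightarrow> 'd::finite \<Rightarrow> real) \<Rightarrow> (nat \<Rightarrow> real)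
    \<Rightarrow> (nat \<Rightarrow> nat \<Rightarrow> nat \<Rightarrow> real) \<Rightarrow> (nat \<Rightarrow> nat \<Rightarrow> real) \<Rightarrow> nat \<Rightarrow> real^'d \<Rightarrow> (nat \<Rightarrow> real)" where
  "hidden N W0 b0 Ws bs 0 x = act_vec N (affine_in N W0 b0 x)"
| "hidden N W0 b0 Ws bs (Suc k) x = act_vec N (affine_NN N (Ws (Suc k)) (bs (Suc k)) (hidden N W0 b0 Ws bs k x))"

text \<open>H_d(N,L): L_L o sigma o L_{L-1} o ... o sigma o L_0 (L >= 1 activation layers).\<close>
definition H :: "nat \<Rightarrow> nat \<Rightarrow> (real^'d::finite \<Rightarrow> real) set" where
  "H N L = {\<phi>. \<exists>W0 b0 Ws bs w c. \<phi> = (\<lambda>x. (\<Sum>j<N. w j * hidden N W0 b0 Ws bs (L - 1) x j) + c)}"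

text \<open>C_d(E_1,...,E_J) with sets indexed E 0, ..., E (J-1).\<close>
definition C :: "(nat \<Rightarrow> (real^'d::finite) set) \<Rightarrow> nat \<Rightarrow> (real^'d \<Rightarrow> real) set" where
  "C Es J = {f. \<exists>r. (\<forall>j<J. r j \<in> \<rat>) \<and> f = (\<lambda>x. \<Sum>j<J. r j * indicator (Es j) x)}"

definition restr_set :: "('a \<Rightarrow> 'b) set \<Rightarrow> 'a set \<Rightarrow> ('a \<Rightarrow> 'b) set" where
  "restr_set F E = (\<lambda>f. restrict f E) ` F"

end

theory Submission
  imports Defs "HOL-Computational_Algebra.Polynomial"
begin


inductive linc :: "(real^'d::finite) set \<Rightarrow> (real^'d \<Rightarrow> real) set \<Rightarrow> (real^'d \<Rightarrow> real) \<Rightarrow> bool"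
  for X S where
  mem: "f \<in> S \<Longrightarrow> linc X S f"
| const: "linc X S (\<lambda>x. c)"
| add: "linc X S f \<Longrightarrow> linc X S g \<Longrightarrow> linc X S (\<lambda>x. f x + g x)"
| scale: "linc X S f \<Longrightarrow> linc X S (\<lambda>x. c * f x)"
| cong: "linc X S f \<Longrightarrow> (\<And>x. x \<in> X \<Longrightarrow> f x = g x) \<Longrightarrow> linc X S g"

lemma linc_diff: "linc X S f \<Longrightarrow> linc X S g \<Longrightarrow> linc X S (\<lambda>x. f x - g x)"
proof -
  assume a: "linc X S f" "linc X S g"
  have "linc X S (\<lambda>x. f x + (-1) * g x)" using a by (intro linc.add linc.scale)
  then show ?thesis by (rule linc.cong) simp
qed

lemma linc_sum: "finite A \<Longrightarrow> (\<And>a. a \<in> A \<Longrightarrow> linc X S (f a)) \<Longrightarrow> linc X S (\<lambda>x. \<Sum>a\<in>A. f a x)"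
proof (induction A rule: finite_induct)
  case empty
  then show ?case using linc.const[of X S 0] by simp
next
  case (insert a A)
  then have "linc X S (\<lambda>x. f a x + (\<Sum>a\<in>A. f a x))" by (intro linc.add) auto
  then show ?case using insert by simp
qed

definition reach :: "nat \<Rightarrow> (real^'d::finite) set \<Rightarrow> nat \<Rightarrow> (real^'d \<Rightarrow> real) set \<Rightarrow> bool" where
  "reach N X k S \<longleftrightarrow> (\<exists>W0 b0 Ws bs. \<forall>f\<in>S. \<exists>i<N. \<forall>x\<in>X. hidden N W0 b0 Ws bs k x i = f x)"

lemma lin_repr:
  fixes N :: nat and F :: "real^'d::finite \<Rightarrow> nat \<Rightarrow> real"
  assumes "\<forall>f\<in>S. \<exists>i<N. \<forall>x\<in>X. F x i = f x" and "linc X S g"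
  shows "\<exists>a c. \<forall>x\<in>X. g x = (\<Sum>j<N. a j * F x j) + c"
  using assms(2)
proof induction
  case (mem f)
  then obtain i where i: "i < N" "\<forall>x\<in>X. F x i = f x" using assms(1) by blast
  have "\<forall>x\<in>X. f x = (\<Sum>j<N. (if j = i then 1 else 0) * F x j) + 0"
  proof
    fix x assume "x \<in> X"
    have "(\<Sum>j<N. (if j = i then 1 else 0) * F x j) = (\<Sum>j<N. if j = i then F x j else 0)"
      by (rule sum.cong) auto
    also have "\<dots> = F x i" using i(1) by simp
    finally show "f x = (\<Sum>j<N. (if j = i then 1 else 0) * F x j) + 0" using i(2) \<open>x \<in> X\<close> by simp
  qed
  then show ?case by (intro exI[of _ "\<lambda>j. if j = i then 1 else 0"] exI[of _ 0])
next
  case (const c)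
  have "\<forall>x\<in>X. c = (\<Sum>j<N. 0 * F x j) + c" by simp
  then show ?case by (intro exI[of _ "\<lambda>j. 0"] exI[of _ c])
next
  case (add f g)
  then obtain a c a' c' where "\<forall>x\<in>X. f x = (\<Sum>j<N. a j * F x j) + c" "\<forall>x\<in>X. g x = (\<Sum>j<N. a' j * F x j) + c'"
    by blast
  then have "\<forall>x\<in>X. f x + g x = (\<Sum>j<N. (a j + a' j) * F x j) + (c + c')"
    by (simp add: distrib_right sum.distrib)
  then show ?case by (intro exI[of _ "\<lambda>j. a j + a' j"] exI[of _ "c + c'"])
next
  case (scale f c)
  then obtain a c0 where "\<forall>x\<in>X. f x = (\<Sum>j<N. a j * F x j) + c0" by blast
  then have "\<forall>x\<in>X. c * f x = (\<Sum>j<N. (c * a j) * F x j) + c * c0"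
    by (simp add: distrib_left sum_distrib_left mult.assoc)
  then show ?case by (intro exI[of _ "\<lambda>j. c * a j"] exI[of _ "c * c0"])
next
  case (cong f g)
  then show ?case by metis
qed

lemma hidden_cong:
  "(\<And>j. 0 < j \<Longrightarrow> j \<le> k \<Longrightarrow> Ws j = Ws' j \<and> bs j = bs' j) \<Longrightarrow>
    hidden N W0 b0 Ws bs k = hidden N W0 b0 Ws' bs' k"
  by (induction k) auto

lemma reach_step:
  assumes r: "reach N X k S" and T: "finite T" "card T \<le> N"
    and g: "\<forall>g\<in>T. \<exists>h. linc X S h \<and> (\<forall>x\<in>X. g x = act (h x))"
  shows "reach N X (Suc k) T"
proof -
  obtain W0 b0 Ws bs where net: "\<forall>f\<in>S. \<exists>i<N. \<forall>x\<in>X. hidden N W0 b0 Ws bs k x i = f x"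
    using r unfolding reach_def by blast
  have "\<forall>g\<in>T. \<exists>a c. \<forall>x\<in>X. g x = act ((\<Sum>j<N. a j * hidden N W0 b0 Ws bs k x j) + c)"
  proof
    fix g assume "g \<in> T"
    then obtain h where h: "linc X S h" "\<forall>x\<in>X. g x = act (h x)" using g by blast
    from lin_repr[OF net h(1)] obtain a c where "\<forall>x\<in>X. h x = (\<Sum>j<N. a j * hidden N W0 b0 Ws bs k x j) + c"
      by blast
    then show "\<exists>a c. \<forall>x\<in>X. g x = act ((\<Sum>j<N. a j * hidden N W0 b0 Ws bs k x j) + c)"
      using h(2) by metis
  qed
  then obtain A C where AC: "\<forall>g\<in>T. \<forall>x\<in>X. g x = act ((\<Sum>j<N. A g j * hidden N W0 b0 Ws bs k x j) + C g)"
    by metis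
  obtain e where e: "bij_betw e {0..<card T} T" using ex_bij_betw_nat_finite[OF T(1)] by blast
  define Ws' where "Ws' = Ws(Suc k := (\<lambda>i j. if i < card T then A (e i) j else 0))"
  define bs' where "bs' = bs(Suc k := (\<lambda>i. if i < card T then C (e i) else 0))"
  have hk: "hidden N W0 b0 Ws' bs' k = hidden N W0 b0 Ws bs k"
    by (rule hidden_cong) (auto simp: Ws'_def bs'_def)
  show ?thesis unfolding reach_def
  proof (intro exI[of _ W0] exI[of _ b0] exI[of _ Ws'] exI[of _ bs'] ballI)
    fix g assume "g \<in> T"
    then obtain i where i: "i < card T" "e i = g" using e unfolding bij_betw_def by force
    have "\<forall>x\<in>X. hidden N W0 b0 Ws' bs' (Suc k) x i = g x"
    proof
      fix x assume "x \<in> X"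
      have "hidden N W0 b0 Ws' bs' (Suc k) x i =
          act ((\<Sum>j<N. A g j * hidden N W0 b0 Ws bs k x j) + C g)"
      proof -
        have w: "Ws' (Suc k) = (\<lambda>i j. if i < card T then A (e i) j else 0)" "bs' (Suc k) = (\<lambda>i. if i < card T then C (e i) else 0)"
          by (simp_all add: Ws'_def bs'_def)
        show ?thesis using i T(2) by (simp only: hidden.simps hk w) (simp add: act_vec_def affine_NN_def)
      qed
      also have "\<dots> = g x" using AC \<open>g \<in> T\<close> \<open>x \<in> X\<close> by metis
      finally show "hidden N W0 b0 Ws' bs' (Suc k) x i = g x" .
    qed
    then show "\<exists>i<N. \<forall>x\<in>X. hidden N W0 b0 Ws' bs' (Suc k) x i = g x" using i T(2)
      by (meson order_less_le_trans)
  qed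
qed

lemma reach_base:
  assumes T: "finite T" "card T \<le> N"
    and g: "\<forall>g\<in>T. \<exists>a c. \<forall>x\<in>X. g x = act ((\<Sum>j\<in>UNIV. a j * x $ j) + c)"
  shows "reach N X 0 T"
proof -
  obtain A C where AC: "\<forall>g\<in>T. \<forall>x\<in>X. g x = act ((\<Sum>j\<in>UNIV. A g j * x $ j) + C g)"
    using g by metis
  obtain e where e: "bij_betw e {0..<card T} T" using ex_bij_betw_nat_finite[OF T(1)] by blast
  define W0 where "W0 = (\<lambda>i j. if i < card T then A (e i) j else 0)"
  define b0 where "b0 = (\<lambda>i. if i < card T then C (e i) else 0)"
  show ?thesis unfolding reach_def
  proof (intro exI[of _ W0] exI[of _ b0] exI[of _ "\<lambda>_ _ _. 0"] exI[of _ "\<lambda>_ _. 0"] ballI)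
    fix g assume "g \<in> T"
    then obtain i where i: "i < card T" "e i = g" using e unfolding bij_betw_def by force
    have "\<forall>x\<in>X. hidden N W0 b0 (\<lambda>_ _ _. 0) (\<lambda>_ _. 0) 0 x i = g x"
      using i T(2) AC \<open>g \<in> T\<close> by (simp add: act_vec_def affine_in_def W0_def b0_def)
    then show "\<exists>i<N. \<forall>x\<in>X. hidden N W0 b0 (\<lambda>_ _ _. 0) (\<lambda>_ _. 0) 0 x i = g x" using i T(2)
      by (meson order_less_le_trans)
  qed
qed

lemma reach_final:
  assumes "reach N X (L - 1) S" "linc X S f"
  shows "restrict f X \<in> restr_set (H N L) X"
proof -
  obtain W0 b0 Ws bs where net: "\<forall>f\<in>S. \<exists>i<N. \<forall>x\<in>X. hidden N W0 b0 Ws bs (L - 1) x i = f x"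
    using assms(1) unfolding reach_def by blast
  from lin_repr[OF net assms(2)] obtain a c where ac:
    "\<forall>x\<in>X. f x = (\<Sum>j<N. a j * hidden N W0 b0 Ws bs (L - 1) x j) + c" by blast
  define \<phi> where "\<phi> = (\<lambda>x. (\<Sum>j<N. a j * hidden N W0 b0 Ws bs (L - 1) x j) + c)"
  have "\<phi> \<in> H N L" unfolding H_def \<phi>_def by blast
  moreover have "restrict f X = restrict \<phi> X" using ac by (auto simp: \<phi>_def restrict_def)
  ultimately show ?thesis unfolding restr_set_def by blast
qed


lemma sigma1_periodic_int: "sigma1 (x + 2 * of_int n) = sigma1 x"
proof -
  have "\<lfloor>(x + 2 * of_int n + 1) / 2\<rfloor> = \<lfloor>(x + 1) / 2 + of_int n\<rfloor>" by (simp add: field_simps)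
  also have "\<dots> = \<lfloor>(x + 1) / 2\<rfloor> + n" by simp
  finally show ?thesis unfolding sigma1_def by (simp add: algebra_simps)
qed

lemma sigma1_abs: "\<bar>x\<bar> \<le> 1 \<Longrightarrow> sigma1 x = \<bar>x\<bar>"
proof -
  assume a: "\<bar>x\<bar> \<le> 1"
  show ?thesis
  proof (cases "x = 1")
    case True
    then show ?thesis by (simp add: sigma1_def)
  next
    case False
    then have "0 \<le> (x + 1) / 2" "(x + 1) / 2 < 1" using a by auto
    then have "\<lfloor>(x + 1) / 2\<rfloor> = 0" by (simp add: floor_eq_iff)
    then show ?thesis by (simp add: sigma1_def)
  qed
qed

lemma sigma1_red: "sigma1 x = \<bar>x - 2 * of_int \<lfloor>(x + 1) / 2\<rfloor>\<bar>" "\<bar>x - 2 * of_int \<lfloor>(x + 1) / 2\<rfloor>\<bar> \<le> 1"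
proof -
  show "sigma1 x = \<bar>x - 2 * of_int \<lfloor>(x + 1) / 2\<rfloor>\<bar>" by (simp add: sigma1_def)
  have "of_int \<lfloor>(x + 1) / 2\<rfloor> \<le> (x + 1) / 2" "(x + 1) / 2 < of_int \<lfloor>(x + 1) / 2\<rfloor> + 1"
    by linarith+
  moreover have "\<And>F::real. F \<le> (x + 1) / 2 \<Longrightarrow> (x + 1) / 2 < F + 1 \<Longrightarrow> \<bar>x - 2 * F\<bar> \<le> 1"
    by (auto simp: abs_le_iff field_simps)
  ultimately show "\<bar>x - 2 * of_int \<lfloor>(x + 1) / 2\<rfloor>\<bar> \<le> 1" by blast
qed

lemma sigma1_range: "0 \<le> sigma1 x" "sigma1 x \<le> 1"
  using sigma1_red[of x] by auto

lemma sigma1_le: "sigma1 x \<le> \<bar>x - 2 * of_int n\<bar>"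
proof -
  define m where "m = \<lfloor>(x + 1) / 2\<rfloor>"
  have s: "sigma1 x = \<bar>x - 2 * of_int m\<bar>" "\<bar>x - 2 * of_int m\<bar> \<le> 1" using sigma1_red[of x] by (auto simp: m_def)
  show ?thesis
  proof (cases "n = m")
    case True then show ?thesis using s by simp
  next
    case False
    then have "\<bar>of_int n - of_int m\<bar> \<ge> (1::real)"
      by (metis of_int_1_le_iff of_int_abs of_int_diff zero_less_abs_iff int_one_le_iff_zero_less right_minus_eq)
    then show ?thesis using s by linarith
  qed
qed

lemma sigma1_lip: "\<bar>sigma1 x - sigma1 y\<bar> \<le> \<bar>x - y\<bar>"
proof -
  have "sigma1 x \<le> \<bar>x - 2 * of_int \<lfloor>(y + 1) / 2\<rfloor>\<bar>" by (rule sigma1_le)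
  moreover have "sigma1 y \<le> \<bar>y - 2 * of_int \<lfloor>(x + 1) / 2\<rfloor>\<bar>" by (rule sigma1_le)
  ultimately show ?thesis using sigma1_red[of x] sigma1_red[of y] by linarith
qed

lemma act_nonneg: "0 \<le> x \<Longrightarrow> act x = sigma1 x"
  by (simp add: act_def)

lemma act_neg: "0 \<le> v \<Longrightarrow> act (- v) = - v / (v + 1)"
proof (cases "v = 0")
  case True
  then show ?thesis by (simp add: act_def sigma1_def)
next
  case False
  assume "0 \<le> v"
  then have "v > 0" using False by simp
  then show ?thesis by (simp add: act_def sigma2_def)
qed

lemma act_recip: "0 \<le> v \<Longrightarrow> 1 + act (- v) = 1 / (v + 1)"
  by (simp add: act_neg field_simps)

lemma act_id: "0 \<le> x \<Longrightarrow> x \<le> 1 \<Longrightarrow> act x = x"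
  by (simp add: act_nonneg sigma1_abs)

lemma act_abs: "\<bar>z\<bar> \<le> 1 \<Longrightarrow> act (z + 2) = \<bar>z\<bar>"
proof -
  assume a: "\<bar>z\<bar> \<le> 1"
  have "act (z + 2) = sigma1 (z + 2 * of_int 1)" using a by (simp add: act_nonneg)
  also have "\<dots> = sigma1 z" by (rule sigma1_periodic_int)
  also have "\<dots> = \<bar>z\<bar>" using a by (simp add: sigma1_abs)
  finally show ?thesis .
qed

lemma act_period: "0 \<le> x + 2 * of_int n \<Longrightarrow> act (x + 2 * of_int n) = sigma1 x"
  by (simp add: act_nonneg sigma1_periodic_int)

lemma act_range: "0 \<le> x \<Longrightarrow> 0 \<le> act x \<and> act x \<le> 1"
  by (simp add: act_nonneg sigma1_range)

definition nrn :: "(real^'d::finite) set \<Rightarrow> (real^'d \<Rightarrow> real) set \<Rightarrow> (real^'d \<Rightarrow> real) \<Rightarrow> bool" where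
  "nrn X S g \<longleftrightarrow> (\<exists>h. linc X S h \<and> (\<forall>x\<in>X. g x = act (h x)))"

definition car :: "real \<Rightarrow> ('a \<Rightarrow> real) \<Rightarrow> 'a \<Rightarrow> real" where
  "car B f = (\<lambda>x. act ((f x + B) / (2 * B)))"

definition absn :: "real \<Rightarrow> ('a \<Rightarrow> real) \<Rightarrow> 'a \<Rightarrow> real" where
  "absn B f = (\<lambda>x. act (f x / B + 2))"

definition recn :: "('a \<Rightarrow> real) \<Rightarrow> 'a \<Rightarrow> real" where
  "recn f = (\<lambda>x. act (- f x))"

lemma linc_cong': "linc X S f \<Longrightarrow> \<forall>x\<in>X. f x = g x \<Longrightarrow> linc X S g"
  using linc.cong[of X S f g] by blast

lemma nrn_act: "linc X S h \<Longrightarrow> nrn X S (\<lambda>x. act (h x))"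
  unfolding nrn_def by blast

lemma linc_affine: "linc X S f \<Longrightarrow> linc X S (\<lambda>x. a * f x + b)"
  by (intro linc.add linc.scale linc.const)

lemma nrn_car: "linc X S f \<Longrightarrow> nrn X S (car B f)"
proof -
  assume "linc X S f"
  then have "linc X S (\<lambda>x. (1 / (2 * B)) * f x + B / (2 * B))" by (rule linc_affine)
  moreover have "\<forall>x\<in>X. car B f x = act ((1 / (2 * B)) * f x + B / (2 * B))"
    by (simp add: car_def add_divide_distrib)
  ultimately show ?thesis unfolding nrn_def by blast
qed

lemma nrn_absn: "linc X S f \<Longrightarrow> nrn X S (absn B f)"
proof -
  assume "linc X S f"
  then have "linc X S (\<lambda>x. (1 / B) * f x + 2)" by (rule linc_affine)
  moreover have "\<forall>x\<in>X. absn B f x = act ((1 / B) * f x + 2)"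
    by (simp add: absn_def)
  ultimately show ?thesis unfolding nrn_def by blast
qed

lemma nrn_recn: "linc X S f \<Longrightarrow> nrn X S (recn f)"
proof -
  assume "linc X S f"
  then have "linc X S (\<lambda>x. (-1) * f x + 0)" by (rule linc_affine)
  moreover have "\<forall>x\<in>X. recn f x = act ((-1) * f x + 0)"
    by (simp add: recn_def)
  ultimately show ?thesis unfolding nrn_def by blast
qed

lemma lin_car: assumes "car B f \<in> S" "B > 0" "\<forall>x\<in>X. \<bar>f x\<bar> \<le> B"
  shows "linc X S f"
proof -
  have "linc X S (\<lambda>x. (2 * B) * car B f x + (- B))" using assms(1) by (intro linc_affine linc.mem)
  moreover have "\<forall>x\<in>X. (2 * B) * car B f x + (- B) = f x"
  proof
    fix x assume "x \<in> X"
    then have "0 \<le> (f x + B) / (2 * B)" "(f x + B) / (2 * B) \<le> 1" using assms(2,3) by (auto simp: field_simps)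
    then show "(2 * B) * car B f x + (- B) = f x" using assms(2) by (simp add: car_def act_id)
  qed
  ultimately show ?thesis by (rule linc_cong')
qed

lemma lin_absn: assumes "absn B f \<in> S" "B > 0" "\<forall>x\<in>X. \<bar>f x\<bar> \<le> B"
  shows "linc X S (\<lambda>x. \<bar>f x\<bar>)"
proof -
  have "linc X S (\<lambda>x. B * absn B f x + 0)" using assms(1) by (intro linc_affine linc.mem)
  moreover have "\<forall>x\<in>X. B * absn B f x + 0 = \<bar>f x\<bar>"
  proof
    fix x assume "x \<in> X"
    then have "\<bar>f x / B\<bar> \<le> 1" using assms(2,3) by (auto simp: field_simps)
    then show "B * absn B f x + 0 = \<bar>f x\<bar>" using assms(2) by (simp add: absn_def act_abs abs_divide)
  qed
  ultimately show ?thesis by (rule linc_cong')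
qed

lemma lin_recn: assumes "recn f \<in> S" "\<forall>x\<in>X. 0 \<le> f x"
  shows "linc X S (\<lambda>x. 1 / (f x + 1))"
proof -
  have "linc X S (\<lambda>x. 1 * recn f x + 1)" using assms(1) by (intro linc_affine linc.mem)
  moreover have "\<forall>x\<in>X. 1 * recn f x + 1 = 1 / (f x + 1)"
    using assms(2) act_recip by (simp add: recn_def add.commute)
  ultimately show ?thesis by (rule linc_cong')
qed

lemma lin_mem_act: "(\<lambda>x. act (h x)) \<in> S \<Longrightarrow> linc X S (\<lambda>x. act (h x))"
  by (rule linc.mem)


definition rnd :: "real \<Rightarrow> int" where "rnd u = \<lfloor>u + 1/2\<rfloor>"

definition phq :: "real \<Rightarrow> real" where "phq u = sigma1 (2 * u + 1/2) / 2 - 1/4"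
definition gq :: "real \<Rightarrow> real" where "gq u = sigma1 (2 * u)"
definition bq :: "real \<Rightarrow> real" where "bq u = max 0 (gq u / 2 - 1/4)"
definition m1q :: "real \<Rightarrow> real \<Rightarrow> real" where "m1q Ms u = min (bq u) (Ms * phq u)"
definition psiq :: "real \<Rightarrow> real \<Rightarrow> real" where "psiq Ms u = phq u + 2 * max (- bq u) (m1q Ms u)"
definition Sq :: "real \<Rightarrow> real \<Rightarrow> real" where "Sq Ms u = u - psiq Ms u"

lemma rnd_bounds: "- 1/2 \<le> u - of_int (rnd u)" "u - of_int (rnd u) < 1/2"
  unfolding rnd_def by linarith+

lemma gq_eq: "gq u = 2 * \<bar>u - of_int (rnd u)\<bar>"
proof -
  define t where "t = u - of_int (rnd u)"
  have t: "-1/2 \<le> t" "t < 1/2" using rnd_bounds[of u] by (auto simp: t_def)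
  have "gq u = sigma1 (2 * t + 2 * of_int (rnd u))" by (simp add: gq_def t_def algebra_simps)
  also have "\<dots> = sigma1 (2 * t)" by (rule sigma1_periodic_int)
  also have "\<dots> = \<bar>2 * t\<bar>" using t by (intro sigma1_abs) auto
  finally show ?thesis unfolding abs_mult t_def by simp
qed

lemma gq_range: "0 \<le> gq u" "gq u \<le> 1"
  using sigma1_range by (auto simp: gq_def)

lemma phq_range: "- 1/4 \<le> phq u" "phq u \<le> 1/4"
  using sigma1_range[of "2 * u + 1/2"] by (auto simp: phq_def)

lemma bq_range: "0 \<le> bq u" "bq u \<le> 1/4"
  using gq_range[of u] by (auto simp: bq_def max_def)

lemma phq_shift: "phq (t + of_int n) = phq t"
proof -
  have "sigma1 (2 * (t + of_int n) + 1/2) = sigma1 ((2 * t + 1/2) + 2 * of_int n)"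
    by (simp add: algebra_simps)
  also have "\<dots> = sigma1 (2 * t + 1/2)" by (rule sigma1_periodic_int)
  finally show ?thesis unfolding phq_def by (simp only:)
qed

lemma phq_mid: "\<bar>t\<bar> \<le> 1/4 \<Longrightarrow> phq t = t"
proof -
  assume a: "\<bar>t\<bar> \<le> 1/4"
  then have "\<bar>2 * t + 1/2\<bar> \<le> 1" "2 * t + 1/2 \<ge> 0" by auto
  then have "sigma1 (2 * t + 1/2) = 2 * t + 1/2" by (simp add: sigma1_abs)
  then show ?thesis unfolding phq_def by linarith
qed

lemma phq_left: "-1/2 \<le> t \<Longrightarrow> t < -1/4 \<Longrightarrow> phq t = - t - 1/2"
proof -
  assume a: "-1/2 \<le> t" "t < -1/4"
  then have "\<bar>2 * t + 1/2\<bar> \<le> 1" "2 * t + 1/2 < 0" by auto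
  then have "sigma1 (2 * t + 1/2) = - (2 * t + 1/2)" by (simp add: sigma1_abs)
  then show ?thesis unfolding phq_def by linarith
qed

lemma phq_right: "1/4 < t \<Longrightarrow> t \<le> 1/2 \<Longrightarrow> phq t = 1/2 - t"
proof -
  assume a: "1/4 < t" "t \<le> 1/2"
  have "sigma1 (2 * t + 1/2) = sigma1 ((2 * t - 3/2) + 2 * of_int 1)" by (rule arg_cong[where f=sigma1]) simp
  also have "\<dots> = sigma1 (2 * t - 3/2)" by (rule sigma1_periodic_int)
  also have "\<dots> = \<bar>2 * t - 3/2\<bar>" using a by (intro sigma1_abs) auto
  also have "\<dots> = 3/2 - 2 * t" using a by simp
  finally show ?thesis unfolding phq_def by linarith
qed

lemma round_exact: "\<bar>y - of_int n\<bar> \<le> 1/4 \<Longrightarrow> y - phq y = of_int n"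
proof -
  assume a: "\<bar>y - of_int n\<bar> \<le> 1/4"
  have "phq y = phq ((y - of_int n) + of_int n)" by simp
  also have "\<dots> = phq (y - of_int n)" by (rule phq_shift)
  also have "\<dots> = y - of_int n" using a by (rule phq_mid)
  finally show ?thesis by simp
qed

lemma Sq_exact:
  assumes Ms: "Ms \<ge> 1" and t: "\<bar>u - of_int n\<bar> \<le> 1/2 - 1/(4 * Ms)"
  shows "Sq Ms u = of_int n"
proof -
  define t where "t = u - of_int n"
  have u: "u = t + of_int n" by (simp add: t_def)
  have tb: "\<bar>t\<bar> \<le> 1/2 - 1/(4 * Ms)" using t by (simp add: t_def)
  have pos: "1/(4 * Ms) > 0" using Ms by simp
  have key: "Ms * (1/2 - \<bar>t\<bar>) \<ge> 1/4"
  proof -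
    have "1/2 - \<bar>t\<bar> \<ge> 1/(4 * Ms)" using tb by simp
    then have "Ms * (1/2 - \<bar>t\<bar>) \<ge> Ms * (1/(4 * Ms))" using Ms by (intro mult_left_mono) auto
    also have "Ms * (1/(4 * Ms)) = 1/4" using Ms by simp
    finally show ?thesis .
  qed
  have g: "gq u = 2 * \<bar>t\<bar>"
  proof -
    have "gq u = sigma1 (2 * t + 2 * of_int n)" by (simp add: gq_def u algebra_simps)
    also have "\<dots> = sigma1 (2 * t)" by (rule sigma1_periodic_int)
    also have "\<dots> = \<bar>2 * t\<bar>"
    proof (rule sigma1_abs)
      have "\<bar>t\<bar> \<le> 1/2" using tb pos by linarith
      then show "\<bar>2 * t\<bar> \<le> 1" by simp
    qed
    finally show ?thesis by simp
  qed
  have b: "bq u = max 0 (\<bar>t\<bar> - 1/4)" by (simp add: bq_def g)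
  have thalf: "\<bar>t\<bar> \<le> 1/2" using tb pos by linarith
  have ph: "phq u = phq t" by (simp add: u phq_shift)
  have psi: "psiq Ms u = t"
  proof (cases "\<bar>t\<bar> \<le> 1/4")
    case True
    then have "phq t = t" by (rule phq_mid)
    moreover have "bq u = 0" using True b by simp
    ultimately show ?thesis by (simp add: psiq_def m1q_def ph)
  next
    case False
    show ?thesis
    proof (cases "t > 0")
      case True
      then have tt: "1/4 < t" "t \<le> 1/2" using False thalf by auto
      then have p: "phq t = 1/2 - t" by (rule phq_right)
      have bb: "bq u = t - 1/4" using b tt by simp
      have "Ms * phq u \<ge> bq u" using key p bb tt by (simp add: ph)
      then have "m1q Ms u = t - 1/4" by (simp add: m1q_def bb)
      then show ?thesis using tt by (simp add: psiq_def ph p bb)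
    next
      case f2: False
      then have tt: "-1/2 \<le> t" "t < -1/4" using False thalf by auto
      then have p: "phq t = - t - 1/2" by (rule phq_left)
      have bb: "bq u = - t - 1/4" using b tt by simp
      have k2: "Ms * (1/2 + t) \<ge> 1/4" using key tt by (simp add: abs_of_neg)
      have "Ms * phq u = - (Ms * (1/2 + t))" by (simp add: ph p algebra_simps)
      then have "Ms * phq u \<le> - bq u" using k2 bb tt by linarith
      then have "m1q Ms u \<le> - bq u" by (simp add: m1q_def bb)
      then have "max (- bq u) (m1q Ms u) = - bq u" by simp
      then show ?thesis using tt by (simp add: psiq_def ph p bb)
    qed
  qed
  show ?thesis by (simp add: Sq_def psi t_def)
qed

lemma psiq_bound: "\<bar>psiq Ms u\<bar> \<le> 3/4"
proof -
  have "\<bar>max (- bq u) (m1q Ms u)\<bar> \<le> bq u" using bq_range[of u] by (auto simp: m1q_def)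
  then have "- bq u \<le> max (- bq u) (m1q Ms u)" "max (- bq u) (m1q Ms u) \<le> bq u" by (auto simp: abs_le_iff)
  then show ?thesis using phq_range[of u] bq_range[of u] unfolding psiq_def abs_le_iff by linarith
qed

lemma m1q_bound: "Ms \<ge> 0 \<Longrightarrow> \<bar>m1q Ms u\<bar> \<le> Ms + 1"
proof -
  assume "Ms \<ge> 0"
  have "\<bar>phq u\<bar> \<le> 1/4" using phq_range[of u] by linarith
  then have "Ms * \<bar>phq u\<bar> \<le> Ms * (1/4)" using \<open>Ms \<ge> 0\<close> by (intro mult_left_mono) auto
  then have "\<bar>Ms * phq u\<bar> \<le> Ms * (1/4)" using \<open>Ms \<ge> 0\<close> by (simp add: abs_mult)
  then show ?thesis using bq_range[of u] \<open>Ms \<ge> 0\<close> by (auto simp: m1q_def)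
qed

lemma recip_diff: "p \<ge> 1 \<Longrightarrow> 1 / p - 1 / (p + 1) = 1 / (p * (p + 1::real))"
proof -
  assume "p \<ge> 1"
  then have "p \<noteq> 0" "p + 1 \<noteq> 0" by auto
  then show ?thesis by (simp add: field_simps)
qed

lemma recip_recip: fixes p c :: real assumes "p \<ge> 1" "c \<ge> p * (p + 1)"
  shows "c * (1 / p - 1 / (p + 1)) - 1 \<ge> 0" "c * (1 / ((c * (1 / p - 1 / (p + 1)) - 1) + 1)) = p * (p + 1)"
proof -
  have pp: "p * (p + 1) > 0" using assms(1) by (intro mult_pos_pos) auto
  have "c * (1 / p - 1 / (p + 1)) = c / (p * (p + 1))" using assms(1) by (simp add: recip_diff)
  moreover have "c / (p * (p + 1)) \<ge> 1" using assms pp by simp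
  ultimately show "c * (1 / p - 1 / (p + 1)) - 1 \<ge> 0" by simp
  have c0: "c > 0" using assms pp by linarith
  show "c * (1 / ((c * (1 / p - 1 / (p + 1)) - 1) + 1)) = p * (p + 1)"
    using assms(1) c0 by (simp add: recip_diff field_simps)
qed

lemma prod_formula: "a * b = ((a + b + K0) * (a + b + K0 + 1) - (a - b + K0) * (a - b + K0 + 1) - 2 * b) / 4 - b * (K0::real)"
  by (simp add: algebra_simps)


definition Qp :: "nat \<Rightarrow> int list \<Rightarrow> real poly" where
  "Qp Cn ws = (\<Sum>c<Cn. smult (of_int (ws ! c)) (\<Prod>c'\<in>{..<Cn} - {c}. [:real c', 1:]))"

lemma poly_Qp: "poly (Qp Cn ws) x = (\<Sum>c<Cn. of_int (ws ! c) * (\<Prod>c'\<in>{..<Cn} - {c}. (real c' + x)))"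
  by (simp add: Qp_def poly_sum poly_prod)

lemma Qp_nonzero:
  assumes "c0 < Cn" "ws ! c0 \<noteq> 0"
  shows "Qp Cn ws \<noteq> 0"
proof -
  have "poly (Qp Cn ws) (- real c0) \<noteq> 0"
  proof -
    have z: "(\<Prod>c'\<in>{..<Cn} - {c}. (real c' + - real c0)) = 0" if "c \<noteq> c0" "c < Cn" for c
      using that assms(1) by (intro prod_zero) auto
    have "poly (Qp Cn ws) (- real c0) = of_int (ws ! c0) * (\<Prod>c'\<in>{..<Cn} - {c0}. (real c' + - real c0))
         + (\<Sum>c\<in>{..<Cn} - {c0}. of_int (ws ! c) * (\<Prod>c'\<in>{..<Cn} - {c}. (real c' + - real c0)))"
      unfolding poly_Qp using assms(1) by (subst sum.remove[of _ c0]) auto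
    also have "(\<Sum>c\<in>{..<Cn} - {c0}. of_int (ws ! c) * (\<Prod>c'\<in>{..<Cn} - {c}. (real c' + - real c0))) = 0"
      using z by (intro sum.neutral) auto
    finally have eq: "poly (Qp Cn ws) (- real c0) = of_int (ws ! c0) * (\<Prod>c'\<in>{..<Cn} - {c0}. (real c' + - real c0))"
      by simp
    have "(\<Prod>c'\<in>{..<Cn} - {c0}. (real c' + - real c0)) \<noteq> 0"
      by (subst prod_zero_iff) auto
    then have "of_int (ws ! c0) * (\<Prod>c'\<in>{..<Cn} - {c0}. (real c' + - real c0)) \<noteq> 0"
      using assms(2) by simp
    then show ?thesis using eq by simp
  qed
  then show ?thesis by auto
qed

lemma exists_gamma: "\<exists>\<gamma>::real. 1 < \<gamma> \<and> \<gamma> < 2 \<and> (\<forall>ws. poly (Qp Cn ws) \<gamma> = 0 \<longrightarrow> Qp Cn ws = 0)"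
proof -
  define A where "A = (\<Union>ws. {\<gamma>. Qp Cn ws \<noteq> 0 \<and> poly (Qp Cn ws) \<gamma> = 0})"
  have "countable A" unfolding A_def
  proof (intro countable_UN[of UNIV] countableI_type)
    fix ws
    show "countable {\<gamma>. Qp Cn ws \<noteq> 0 \<and> poly (Qp Cn ws) \<gamma> = 0}"
    proof (cases "Qp Cn ws = 0")
      case True then show ?thesis by simp
    next
      case False
      then have "finite {\<gamma>. poly (Qp Cn ws) \<gamma> = 0}" by (rule poly_roots_finite)
      then show ?thesis using False by (simp add: countable_finite)
    qed
  qed
  have "\<not> {1<..<2::real} \<subseteq> A"
    using \<open>countable A\<close> uncountable_open_interval[of 1 "2::real"] countable_subset by auto
  then obtain \<gamma> where "\<gamma> \<in> {1<..<2}" "\<gamma> \<notin> A" by blast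
  then show ?thesis unfolding A_def by auto
qed

lemma Zmodule: "Modules.module (\<lambda>r. (*) (real_of_int r))"
  by (simp add: Modules.module.intro distrib_left mult.commute)

lemma indep_recips:
  fixes \<gamma> :: real
  assumes g: "1 < \<gamma>" "\<forall>ws. poly (Qp Cn ws) \<gamma> = 0 \<longrightarrow> Qp Cn ws = 0"
  defines "\<theta> \<equiv> (\<lambda>c::nat. 1 / (2 * (real c + \<gamma>)))"
  shows "module.independent (\<lambda>r. (*) (real_of_int r)) (\<theta> ` {..<Cn})" "inj_on \<theta> {..<Cn}"
proof -
  have pos: "real c + \<gamma> > 0" for c using g by (simp add: add_nonneg_pos)
  show inj: "inj_on \<theta> {..<Cn}"
    by (rule inj_onI) (use pos in \<open>auto simp: \<theta>_def field_simps\<close>)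
  interpret M: Modules.module "(\<lambda>r. (*) (real_of_int r))" by (rule Zmodule)
  show "M.independent (\<theta> ` {..<Cn})"
    unfolding M.independent_explicit_module
  proof (intro allI impI)
    fix t u v
    assume t: "finite t" "t \<subseteq> \<theta> ` {..<Cn}" and s: "(\<Sum>v\<in>t. real_of_int (u v) * v) = 0" and v: "v \<in> t"
    define I where "I = {c\<in>{..<Cn}. \<theta> c \<in> t}"
    have tI: "t = \<theta> ` I" using t(2) by (auto simp: I_def)
    define ws where "ws = map (\<lambda>c. if \<theta> c \<in> t then u (\<theta> c) else 0) [0..<Cn]"
    have ws: "ws ! c = (if \<theta> c \<in> t then u (\<theta> c) else 0)" if "c < Cn" for c
      using that by (simp add: ws_def)
    have injI: "inj_on \<theta> I" using inj by (rule inj_on_subset) (auto simp: I_def)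
    have "(\<Sum>c<Cn. of_int (ws ! c) * \<theta> c) = (\<Sum>c\<in>I. real_of_int (u (\<theta> c)) * \<theta> c)"
    proof -
      have "(\<Sum>c<Cn. of_int (ws ! c) * \<theta> c) = (\<Sum>c<Cn. if c \<in> I then real_of_int (u (\<theta> c)) * \<theta> c else 0)"
        by (rule sum.cong) (auto simp: ws I_def)
      also have "\<dots> = (\<Sum>c\<in>I. real_of_int (u (\<theta> c)) * \<theta> c)"
        by (subst sum.If_cases) (auto simp: I_def intro!: arg_cong2[where f=sum])
      finally show ?thesis .
    qed
    also have "\<dots> = (\<Sum>v\<in>t. real_of_int (u v) * v)"
      unfolding tI by (subst sum.reindex[OF injI]) simp
    finally have s2: "(\<Sum>c<Cn. of_int (ws ! c) * \<theta> c) = 0" using s by simp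
    have "poly (Qp Cn ws) \<gamma> = 0"
    proof -
      have "poly (Qp Cn ws) \<gamma> = (\<Sum>c<Cn. of_int (ws ! c) * ((\<Prod>c'\<in>{..<Cn}. (real c' + \<gamma>)) * (2 * \<theta> c)))"
      proof (unfold poly_Qp, rule sum.cong[OF refl])
        fix c assume c: "c \<in> {..<Cn}"
        have "(\<Prod>c'\<in>{..<Cn}. (real c' + \<gamma>)) = (real c + \<gamma>) * (\<Prod>c'\<in>{..<Cn} - {c}. (real c' + \<gamma>))"
          using c by (subst prod.remove[of _ c]) auto
        then show "of_int (ws ! c) * (\<Prod>c'\<in>{..<Cn} - {c}. real c' + \<gamma>) =
             of_int (ws ! c) * ((\<Prod>c'\<in>{..<Cn}. real c' + \<gamma>) * (2 * \<theta> c))"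
          using pos[of c] by (simp add: \<theta>_def field_simps)
      qed
      also have "\<dots> = 2 * (\<Prod>c'\<in>{..<Cn}. (real c' + \<gamma>)) * (\<Sum>c<Cn. of_int (ws ! c) * \<theta> c)"
        by (simp add: sum_distrib_left algebra_simps)
      finally show ?thesis using s2 by simp
    qed
    then have "Qp Cn ws = 0" using g(2) by blast
    then have wz: "ws ! c = 0" if "c < Cn" for c using Qp_nonzero that by blast
    obtain c where c: "c \<in> I" "v = \<theta> c" using v tI by blast
    then show "u v = 0" using wz[of c] by (auto simp: ws I_def)
  qed
qed

lemma fit:
  fixes lab :: "nat \<Rightarrow> nat" and Cn P :: nat
  assumes P: "P > 0" and lab: "\<forall>c<Cn. lab c \<le> P"
  shows "\<exists>\<gamma> t. 1 < \<gamma> \<and> \<gamma> < 2 \<and> (\<forall>c<Cn. \<bar>real P * sigma1 (t / (real c + \<gamma>)) - real (lab c)\<bar> \<le> 1/4)"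
proof -
  obtain \<gamma> :: real where g: "1 < \<gamma>" "\<gamma> < 2" "\<forall>ws. poly (Qp Cn ws) \<gamma> = 0 \<longrightarrow> Qp Cn ws = 0"
    using exists_gamma by blast
  define \<theta> where "\<theta> = (\<lambda>c::nat. 1 / (2 * (real c + \<gamma>)))"
  define \<alpha> where "\<alpha> = (\<lambda>c::nat. real (lab c) / (2 * real P))"
  have ind: "module.independent (\<lambda>r. (*) (real_of_int r)) (\<theta> ` {..<Cn})" "inj_on \<theta> {..<Cn}"
    using indep_recips[OF g(1) g(3)] unfolding \<theta>_def by auto
  have eps: "1 / (8 * real P) > 0" using P by simp
  obtain t h where th: "\<And>i. i < Cn \<Longrightarrow> \<bar>t * \<theta> i - of_int (h i) - \<alpha> i\<bar> < 1 / (8 * real P)"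
    using Kronecker_thm_1[OF ind eps] by blast
  have "\<forall>c<Cn. \<bar>real P * sigma1 (t / (real c + \<gamma>)) - real (lab c)\<bar> \<le> 1/4"
  proof (intro allI impI)
    fix c assume c: "c < Cn"
    have pos: "real c + \<gamma> > 0" using g by (simp add: add_nonneg_pos)
    define e where "e = t / (real c + \<gamma>) - real (lab c) / real P - 2 * of_int (h c)"
    have nz: "real c + \<gamma> \<noteq> 0" "real P \<noteq> 0" using pos P by auto
    have A: "t / (real c + \<gamma>) = 2 * (t * \<theta> c)" using nz by (simp add: \<theta>_def field_simps)
    have B: "real (lab c) / real P = 2 * \<alpha> c" using nz by (simp add: \<alpha>_def field_simps)
    have "e = 2 * (t * \<theta> c - of_int (h c) - \<alpha> c)"
      unfolding e_def A B by (simp add: algebra_simps)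
    then have eb: "\<bar>e\<bar> < 1 / (4 * real P)" using th[OF c] by simp
    have "sigma1 (t / (real c + \<gamma>)) = sigma1 ((real (lab c) / real P + e) + 2 * of_int (h c))"
      by (simp add: e_def)
    also have "\<dots> = sigma1 (real (lab c) / real P + e)" by (rule sigma1_periodic_int)
    finally have s: "sigma1 (t / (real c + \<gamma>)) = sigma1 (real (lab c) / real P + e)" .
    have l01: "0 \<le> real (lab c) / real P" "real (lab c) / real P \<le> 1" using lab c P by auto
    have s0: "sigma1 (real (lab c) / real P) = real (lab c) / real P"
      using l01 by (simp add: sigma1_abs)
    have "\<bar>sigma1 (real (lab c) / real P + e) - real (lab c) / real P\<bar> \<le> \<bar>e\<bar>"
      using sigma1_lip[of "real (lab c) / real P + e" "real (lab c) / real P"] s0 by simp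
    then have "real P * \<bar>sigma1 (t / (real c + \<gamma>)) - real (lab c) / real P\<bar> \<le> real P * (1 / (4 * real P))"
      using eb s by (intro mult_left_mono) auto
    moreover have "real P * \<bar>sigma1 (t / (real c + \<gamma>)) - real (lab c) / real P\<bar>
        = \<bar>real P * sigma1 (t / (real c + \<gamma>)) - real (lab c)\<bar>"
    proof -
      have z: "real P * (sigma1 (t / (real c + \<gamma>)) - real (lab c) / real P) = real P * sigma1 (t / (real c + \<gamma>)) - real (lab c)"
        using nz by (simp add: right_diff_distrib)
      have "real P * \<bar>sigma1 (t / (real c + \<gamma>)) - real (lab c) / real P\<bar> = \<bar>real P * (sigma1 (t / (real c + \<gamma>)) - real (lab c) / real P)\<bar>"
        by (simp add: abs_mult)
      then show ?thesis using z by simp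
    qed
    ultimately show "\<bar>real P * sigma1 (t / (real c + \<gamma>)) - real (lab c)\<bar> \<le> 1/4" using P by simp
  qed
  then show ?thesis using g by blast
qed


lemma separation:
  fixes Es :: "nat \<Rightarrow> ('a::heine_borel) set"
  assumes J: "J \<ge> 1" and dis: "\<And>i j. i < J \<Longrightarrow> j < J \<Longrightarrow> i \<noteq> j \<Longrightarrow> Es i \<inter> Es j = {}"
    and cpt: "\<And>j. j < J \<Longrightarrow> compact (Es j)"
  shows "\<exists>\<delta>>0. \<forall>i<J. \<forall>j<J. i \<noteq> j \<longrightarrow> (\<forall>x\<in>Es i. \<forall>y\<in>Es j. \<delta> \<le> dist x y)"
proof -
  have "\<forall>i<J. \<exists>e>0. \<forall>x\<in>Es i. \<forall>y\<in>(\<Union>j\<in>{j. j < J \<and> j \<noteq> i}. Es j). e \<le> dist x y"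
  proof (intro allI impI)
    fix i assume i: "i < J"
    show "\<exists>e>0. \<forall>x\<in>Es i. \<forall>y\<in>(\<Union>j\<in>{j. j < J \<and> j \<noteq> i}. Es j). e \<le> dist x y"
    proof (rule separate_compact_closed)
      show "compact (Es i)" using cpt i by blast
      show "closed (\<Union>j\<in>{j. j < J \<and> j \<noteq> i}. Es j)"
        by (intro closed_UN) (auto intro: compact_imp_closed cpt)
      show "Es i \<inter> (\<Union>j\<in>{j. j < J \<and> j \<noteq> i}. Es j) = {}" using dis i by blast
    qed
  qed
  then have "\<forall>i. \<exists>e. i < J \<longrightarrow> e > 0 \<and> (\<forall>x\<in>Es i. \<forall>y\<in>(\<Union>j\<in>{j. j < J \<and> j \<noteq> i}. Es j). e \<le> dist x y)"
    by blast
  from choice[OF this] obtain e where e: "\<forall>i<J. e i > 0 \<and> (\<forall>x\<in>Es i. \<forall>y\<in>(\<Union>j\<in>{j. j < J \<and> j \<noteq> i}. Es j). e i \<le> dist x y)"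
    by blast
  define \<delta> where "\<delta> = Min (e ` {..<J})"
  have "0 \<in> {..<J}" using J by simp
  then have ne: "e ` {..<J} \<noteq> {}" by blast
  have "\<delta> > 0" unfolding \<delta>_def using e ne by (subst Min_gr_iff) auto
  moreover have "\<forall>i<J. \<forall>j<J. i \<noteq> j \<longrightarrow> (\<forall>x\<in>Es i. \<forall>y\<in>Es j. \<delta> \<le> dist x y)"
  proof (intro allI impI ballI)
    fix i j x y assume ij: "i < J" "j < J" "i \<noteq> j" and xy: "x \<in> Es i" "y \<in> Es j"
    have "\<delta> \<le> e i" unfolding \<delta>_def using ij by (intro Min_le) auto
    also have "e i \<le> dist x y" using e ij xy by blast
    finally show "\<delta> \<le> dist x y" .
  qed
  ultimately show ?thesis by blast
qed

lemma digits_inj: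
  fixes M :: nat
  shows "\<forall>m<D. a m < M \<Longrightarrow> \<forall>m<D. b m < M \<Longrightarrow> (\<Sum>m<D. a m * M ^ m) = (\<Sum>m<D. b m * M ^ m) \<Longrightarrow> \<forall>m<D. a m = b m"
proof (induction D arbitrary: a b)
  case 0
  then show ?case by simp
next
  case (Suc D)
  define A where "A = (\<Sum>m<D. a (Suc m) * M ^ m)"
  define B where "B = (\<Sum>m<D. b (Suc m) * M ^ m)"
  have sh: "(\<Sum>m<Suc D. f m * M ^ m) = f 0 + M * (\<Sum>m<D. f (Suc m) * M ^ m)" for f :: "nat \<Rightarrow> nat"
  proof -
    have "(\<Sum>m<Suc D. f m * M ^ m) = f 0 * M ^ 0 + (\<Sum>m<D. f (Suc m) * M ^ Suc m)"
      by (rule sum.lessThan_Suc_shift)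
    also have "(\<Sum>m<D. f (Suc m) * M ^ Suc m) = M * (\<Sum>m<D. f (Suc m) * M ^ m)"
      unfolding sum_distrib_left by (rule sum.cong) (simp_all only: power_Suc mult_ac)
    finally show ?thesis by simp
  qed
  have e: "a 0 + M * A = b 0 + M * B" using Suc.prems(3) sh[of a] sh[of b] by (simp only: A_def B_def)
  have a0: "a 0 < M" "b 0 < M" using Suc.prems(1,2) by auto
  have "(a 0 + M * A) mod M = a 0" using a0 by (simp add: mod_mult_self2)
  moreover have "(b 0 + M * B) mod M = b 0" using a0 by (simp add: mod_mult_self2)
  ultimately have h0: "a 0 = b 0" using e by simp
  have "M > 0" using a0 by simp
  then have AB: "A = B" using e h0 by simp
  have "\<forall>m<D. a (Suc m) = b (Suc m)"
  proof (rule Suc.IH)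
    show "\<forall>m<D. a (Suc m) < M" "\<forall>m<D. b (Suc m) < M" using Suc.prems(1,2) by auto
    show "(\<Sum>m<D. a (Suc m) * M ^ m) = (\<Sum>m<D. b (Suc m) * M ^ m)" using AB by (simp only: A_def B_def)
  qed
  show ?case
  proof (intro allI impI)
    fix m assume "m < Suc D"
    then show "a m = b m" using h0 \<open>\<forall>m<D. a (Suc m) = b (Suc m)\<close> by (cases m) auto
  qed
qed

definition badu :: "nat \<Rightarrow> real \<Rightarrow> bool" where
  "badu d u \<longleftrightarrow> \<bar>u - of_int (rnd u)\<bar> > 1/2 - 1 / (2 * (real d + 1))"

lemma badu_half:
  assumes "badu d u"
  shows "\<exists>z::int. \<bar>u - of_int z - 1/2\<bar> < 1 / (2 * (real d + 1))"
proof -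
  define q where "q = 1 / (2 * (real d + 1))"
  define e where "e = u - of_int (rnd u)"
  have e: "-1/2 \<le> e" "e < 1/2" using rnd_bounds[of u] by (auto simp: e_def)
  have b: "\<bar>e\<bar> > 1/2 - q" using assms by (simp add: badu_def e_def q_def)
  show ?thesis
  proof (cases "e \<ge> 0")
    case True
    then have "e > 1/2 - q" using b by simp
    then have "\<bar>e - 1/2\<bar> < q" using e by (simp add: abs_if)
    then have "\<bar>u - of_int (rnd u) - 1/2\<bar> < q" by (simp add: e_def)
    then show ?thesis unfolding q_def by blast
  next
    case False
    then have "- e > 1/2 - q" using b by simp
    then have "\<bar>e + 1/2\<bar> < q" using e False by (simp add: abs_if)
    moreover have "u - of_int (rnd u - 1) - 1/2 = e + 1/2" by (simp add: e_def)
    ultimately have "\<bar>u - of_int (rnd u - 1) - 1/2\<bar> < q" by simp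
    then show ?thesis unfolding q_def by blast
  qed
qed

lemma badu_unique:
  assumes "badu d (v + real k / (real d + 1))" "badu d (v + real k' / (real d + 1))" "k \<le> d" "k' \<le> d"
  shows "k = k'"
proof (rule ccontr)
  assume ne: "k \<noteq> k'"
  define q where "q = 1 / (2 * (real d + 1))"
  obtain z where z: "\<bar>v + real k / (real d + 1) - of_int z - 1/2\<bar> < q"
    using badu_half[OF assms(1)] unfolding q_def by blast
  obtain z' where z': "\<bar>v + real k' / (real d + 1) - of_int z' - 1/2\<bar> < q"
    using badu_half[OF assms(2)] unfolding q_def by blast
  have "\<bar>(real k' - real k) / (real d + 1) - of_int (z' - z)\<bar> < 2 * q"
  proof -
    have "(real k' - real k) / (real d + 1) - of_int (z' - z) =
      (v + real k' / (real d + 1) - of_int z' - 1/2) - (v + real k / (real d + 1) - of_int z - 1/2)"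
      by (simp add: diff_divide_distrib)
    then show ?thesis using z z' by linarith
  qed
  then have "\<bar>((real k' - real k) / (real d + 1) - of_int (z' - z)) * (real d + 1)\<bar> < 2 * q * (real d + 1)"
    by (simp add: abs_mult)
  moreover have "((real k' - real k) / (real d + 1) - of_int (z' - z)) * (real d + 1)
      = of_int (int k' - int k - (int d + 1) * (z' - z))"
    by (simp add: field_simps)
  moreover have "2 * q * (real d + 1) = 1" by (simp add: q_def)
  ultimately have "\<bar>of_int (int k' - int k - (int d + 1) * (z' - z))\<bar> < (1::real)" by simp
  then have D: "int k' - int k = (int d + 1) * (z' - z)" by linarith
  have "z' \<noteq> z" using D ne by auto
  then have "\<bar>(int d + 1) * (z' - z)\<bar> \<ge> int d + 1"
    by (simp add: abs_mult)
  then have "\<bar>int k' - int k\<bar> \<ge> int d + 1" using D by simp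
  then show False using assms(3,4) by linarith
qed

lemma good_shift:
  fixes v :: "nat \<Rightarrow> real"
  shows "\<exists>k\<le>d. \<forall>m<d. \<not> badu d (v m + real k / (real d + 1))"
proof (rule ccontr)
  assume "\<not> ?thesis"
  then have "\<forall>k\<in>{..d}. \<exists>m<d. badu d (v m + real k / (real d + 1))" by auto
  then obtain f where f: "\<forall>k\<in>{..d}. f k < d \<and> badu d (v (f k) + real k / (real d + 1))" by metis
  have "inj_on f {..d}"
  proof (rule inj_onI)
    fix k k'
    assume kk: "k \<in> {..d}" "k' \<in> {..d}" "f k = f k'"
    have A: "badu d (v (f k) + real k / (real d + 1))" using f kk(1) by blast
    have B: "badu d (v (f k') + real k' / (real d + 1))" using f kk(2) by blast
    then have B': "badu d (v (f k) + real k' / (real d + 1))" using kk(3) by simp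
    from A B' have "badu d (v (f k) + real k / (real d + 1))" "badu d (v (f k) + real k' / (real d + 1))" "k \<le> d" "k' \<le> d"
      using kk by auto
    then show "k = k'" by (rule badu_unique)
  qed
  moreover have "f ` {..d} \<subseteq> {..<d}" using f by auto
  ultimately have "card {..d} \<le> card {..<d}" by (intro card_inj_on_le) auto
  then show False by simp
qed


lemma common_denom:
  fixes J :: nat and r :: "nat \<Rightarrow> real"
  shows "(\<forall>j<J. r j \<in> \<rat>) \<Longrightarrow> \<exists>q::nat. q > 0 \<and> (\<forall>j<J. real q * r j \<in> \<int>)"
proof (induction J)
  case 0
  then show ?case by (intro exI[of _ 1]) auto
next
  case (Suc J)
  then obtain q where q: "q > 0" "\<forall>j<J. real q * r j \<in> \<int>" by auto
  have "r J \<in> \<rat>" using Suc.prems by auto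
  then obtain a b where ab: "b > 0" "r J = of_int a / of_int b" by (auto elim: Rats_cases')
  define q' where "q' = q * nat b"
  have "q' > 0" using q ab by (simp add: q'_def)
  moreover have "\<forall>j<Suc J. real q' * r j \<in> \<int>"
  proof (intro allI impI)
    fix j assume "j < Suc J"
    show "real q' * r j \<in> \<int>"
    proof (cases "j = J")
      case True
      have "real q' * r j = of_int (int q * a)" using ab True by (simp add: q'_def)
      then show ?thesis by simp
    next
      case False
      then have "j < J" using \<open>j < Suc J\<close> by simp
      then have "real q * r j \<in> \<int>" using q by auto
      moreover have "real q' = of_int b * real q" using ab(1) by (simp add: q'_def)
      then have "real q' * r j = of_int b * (real q * r j)" by simp
      ultimately show ?thesis by (metis Ints_mult Ints_of_int)
    qed
  qed
  ultimately show ?case by blast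
qed

lemma digits_bound:
  fixes M :: nat
  shows "\<forall>m<D. a m < M \<Longrightarrow> (\<Sum>m<D. a m * M ^ m) < M ^ D"
proof (induction D)
  case 0 then show ?case by simp
next
  case (Suc D)
  have "(\<Sum>m<Suc D. a m * M ^ m) = (\<Sum>m<D. a m * M ^ m) + a D * M ^ D" by simp
  also have "\<dots> < M ^ D + a D * M ^ D" using Suc by simp
  also have "\<dots> \<le> M ^ D + (M - 1) * M ^ D" using Suc.prems by (intro add_left_mono mult_right_mono) auto
  also have "\<dots> = M * M ^ D" using Suc.prems by (cases M) auto
  finally show ?case by simp
qed

lemma card_UN_list:
  assumes "finite A" "\<forall>a\<in>A. length (F a) \<le> n"
  shows "card (\<Union>a\<in>A. set (F a)) \<le> n * card A"
proof -
  have "card (\<Union>a\<in>A. set (F a)) \<le> (\<Sum>a\<in>A. card (set (F a)))" by (rule card_UN_le[OF assms(1)])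
  also have "\<dots> \<le> (\<Sum>a\<in>A. n)" using assms(2) by (intro sum_mono) (meson card_length order_trans)
  finally show ?thesis by (simp add: mult.commute)
qed

lemma finite_UN_list: "finite A \<Longrightarrow> finite (\<Union>a\<in>A. set (F a))" by auto

lemma memU: "(m, k) \<in> A \<Longrightarrow> g \<in> set (F m k) \<Longrightarrow> g \<in> (\<Union>p\<in>A. set (F (fst p) (snd p)))"
  by force

lemma memK: "k \<in> A \<Longrightarrow> g \<in> set (F k) \<Longrightarrow> g \<in> (\<Union>k\<in>A. set (F k))"
  by blast

lemma allU: "(\<And>m k. (m, k) \<in> A \<Longrightarrow> \<forall>g\<in>set (F m k). P g) \<Longrightarrow> \<forall>g\<in>(\<Union>p\<in>A. set (F (fst p) (snd p))). P g"
  by force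

lemma allK: "(\<And>k. k \<in> A \<Longrightarrow> \<forall>g\<in>set (F k). P g) \<Longrightarrow> \<forall>g\<in>(\<Union>k\<in>A. set (F k)). P g"
  by blast

lemma max0_abs: "max 0 (z::real) = (z + \<bar>z\<bar>) / 2" by (simp add: max_def abs_if)
lemma min_abs: "min (a::real) b = (a + b - \<bar>a - b\<bar>) / 2" by (simp add: min_def abs_if)
lemma max_abs: "max (a::real) b = (a + b + \<bar>a - b\<bar>) / 2" by (simp add: max_def abs_if)

lemma reach_pad:
  assumes "reach N X k S" "linc X S F" "B > 0" "\<forall>x\<in>X. \<bar>F x\<bar> \<le> B" "N \<ge> 1"
  shows "k' > k \<Longrightarrow> reach N X k' {car B F}"
proof (induction k')
  case 0 then show ?case by simp
next
  case (Suc k')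
  show ?case
  proof (cases "k' = k")
    case True
    show ?thesis unfolding True
      by (rule reach_step[OF assms(1)]) (use assms in \<open>auto intro: nrn_car[unfolded nrn_def]\<close>)
  next
    case False
    then have r: "reach N X k' {car B F}" using Suc by auto
    have "linc X {car B F} F" by (rule lin_car) (use assms in auto)
    then show ?thesis
      by (intro reach_step[OF r]) (use assms in \<open>auto intro: nrn_car[unfolded nrn_def]\<close>)
  qed
qed


definition aa :: "nat \<Rightarrow> real" where "aa d = 1/2 - 1 / (2 * (real d + 1))"
definition tau :: "nat \<Rightarrow> real" where "tau d = 1 / (4 * (real d + 1))"
definition beta :: "nat \<Rightarrow> (nat \<Rightarrow> nat \<Rightarrow> 'a \<Rightarrow> real) \<Rightarrow> nat \<Rightarrow> nat \<Rightarrow> 'a \<Rightarrow> real" where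
  "beta d u m k x = max 0 (gq (u m k x) / 2 - aa d)"
definition Zf :: "nat \<Rightarrow> (nat \<Rightarrow> nat \<Rightarrow> 'a \<Rightarrow> real) \<Rightarrow> nat \<Rightarrow> 'a \<Rightarrow> real" where
  "Zf d u k x = tau d - (\<Sum>m<d. beta d u m k x)"
definition omg :: "nat \<Rightarrow> (nat \<Rightarrow> nat \<Rightarrow> 'a \<Rightarrow> real) \<Rightarrow> nat \<Rightarrow> 'a \<Rightarrow> real" where
  "omg d u k x = max 0 (Zf d u k x)"
definition Wf :: "nat \<Rightarrow> (nat \<Rightarrow> nat \<Rightarrow> 'a \<Rightarrow> real) \<Rightarrow> 'a \<Rightarrow> real" where
  "Wf d u x = (\<Sum>k\<le>d. omg d u k x)"
definition crf :: "nat \<Rightarrow> nat \<Rightarrow> (nat \<Rightarrow> nat \<Rightarrow> 'a \<Rightarrow> real) \<Rightarrow> nat \<Rightarrow> 'a \<Rightarrow> real" where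
  "crf d M u k x = (\<Sum>m<d. Sq (real d + 1) (u m k x) * real M ^ m) + real k * real M ^ d"
definition Gf :: "nat \<Rightarrow> nat \<Rightarrow> (nat \<Rightarrow> nat \<Rightarrow> 'a \<Rightarrow> real) \<Rightarrow> real \<Rightarrow> real \<Rightarrow> nat \<Rightarrow> 'a \<Rightarrow> real" where
  "Gf d M u t \<gamma> k x = sigma1 (t / (crf d M u k x + \<gamma>))"
definition ellf :: "nat \<Rightarrow> nat \<Rightarrow> (nat \<Rightarrow> nat \<Rightarrow> 'a \<Rightarrow> real) \<Rightarrow> real \<Rightarrow> real \<Rightarrow> nat \<Rightarrow> nat \<Rightarrow> 'a \<Rightarrow> real" where
  "ellf d M u t \<gamma> P k x = real P * Gf d M u t \<gamma> k x - phq (real P * Gf d M u t \<gamma> k x)"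

definition aff1 :: "(real^'d::finite \<Rightarrow> real) \<Rightarrow> bool" where
  "aff1 f \<longleftrightarrow> (\<exists>\<alpha> \<beta> i. \<forall>x. f x = \<alpha> * x $ i + \<beta>)"

lemma aff1_affine: "aff1 f \<Longrightarrow> aff1 (\<lambda>x. c * f x + e)"
  unfolding aff1_def
proof (elim exE)
  fix \<alpha> \<beta> i assume "\<forall>x. f x = \<alpha> * x $ i + \<beta>"
  then have "\<forall>x. c * f x + e = (c * \<alpha>) * x $ i + (c * \<beta> + e)" by (simp add: algebra_simps)
  then show "\<exists>\<alpha> \<beta> i. \<forall>x. c * f x + e = \<alpha> * x $ i + \<beta>" by blast
qed

lemma aff1_base: "aff1 h \<Longrightarrow> \<exists>a c. \<forall>x\<in>X. act (h x) = act ((\<Sum>j\<in>UNIV. a j * x $ j) + c)"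
  unfolding aff1_def
proof (elim exE)
  fix \<alpha> \<beta> i assume h: "\<forall>x. h x = \<alpha> * x $ i + \<beta>"
  have "\<forall>x\<in>X. act (h x) = act ((\<Sum>j\<in>UNIV. (if j = i then \<alpha> else 0) * x $ j) + \<beta>)"
  proof
    fix x
    have "(\<Sum>j\<in>UNIV. (if j = i then \<alpha> else 0) * x $ j) = (\<Sum>j\<in>UNIV. if j = i then \<alpha> * x $ j else 0)"
      by (rule sum.cong) auto
    also have "\<dots> = \<alpha> * x $ i" by simp
    finally show "act (h x) = act ((\<Sum>j\<in>UNIV. (if j = i then \<alpha> else 0) * x $ j) + \<beta>)" using h by simp
  qed
  then show ?thesis by (intro exI[of _ "\<lambda>j. if j = i then \<alpha> else 0"] exI[of _ \<beta>])
qed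

lemma aff1_car: "aff1 f \<Longrightarrow> \<exists>a c. \<forall>x\<in>X. car B f x = act ((\<Sum>j\<in>UNIV. a j * x $ j) + c)"
proof -
  assume "aff1 f"
  then have "aff1 (\<lambda>x. (1 / (2 * B)) * f x + B / (2 * B))" by (rule aff1_affine)
  then obtain a c where "\<forall>x\<in>X. act ((1 / (2 * B)) * f x + B / (2 * B)) = act ((\<Sum>j\<in>UNIV. a j * x $ j) + c)"
    using aff1_base by blast
  moreover have "car B f x = act ((1 / (2 * B)) * f x + B / (2 * B))" for x
    by (simp add: car_def add_divide_distrib)
  ultimately show ?thesis by metis
qed

lemma card_le_N:
  fixes d N n1 n2 n3 :: nat
  assumes "d \<ge> 1" "N \<ge> 36 * d * (2 * d + 1)" "n1 \<le> 5" "n2 \<le> 5" "n3 \<le> 5"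
  shows "n1 * (d * (d + 1)) + n2 * (d + 1) + n3 \<le> N"
proof -
  have a: "d + 1 \<le> d * (d + 1)" using assms(1) by simp
  have b: "1 \<le> d * (d + 1)" using assms(1) by simp
  have "n1 * (d * (d + 1)) + n2 * (d + 1) + n3 \<le> 5 * (d * (d + 1)) + 5 * (d * (d + 1)) + 5 * (d * (d + 1))"
    using assms(3,4,5) a b by (intro add_mono mult_mono) auto
  also have "\<dots> = 15 * (d * d + d)" by (simp add: algebra_simps)
  also have "\<dots> \<le> 36 * d * (2 * d + 1)" by (simp add: algebra_simps)
  finally show ?thesis using assms(2) by simp
qed


locale NETL =
  fixes X :: "(real^'d::finite) set" and \<xi> :: "nat \<Rightarrow> 'd" and u :: "nat \<Rightarrow> nat \<Rightarrow> real^'d \<Rightarrow> real"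
    and vv out :: "real^'d \<Rightarrow> real" and P M d N L :: nat and hh c0 Bu0 \<gamma> t O' q' :: real
  assumes d1: "d \<ge> 1" and NN: "N \<ge> 36 * d * (2 * d + 1)" and LL: "L \<ge> 12"
    and u_def: "u = (\<lambda>m k x. x $ \<xi> m / hh + c0 + real k / (real d + 1))"
    and ub: "\<forall>x\<in>X. \<forall>m k. k \<le> d \<longrightarrow> 2 \<le> u m k x \<and> u m k x \<le> Bu0" and Bu0: "Bu0 \<ge> 2"
    and P: "P > 0" and \<gamma>: "\<gamma> > 1"
    and sem: "\<forall>x\<in>X. \<forall>k\<le>d. omg d u k x * ellf d M u t \<gamma> P k x = omg d u k x * vv x"
    and vvb: "\<forall>x\<in>X. 0 \<le> vv x \<and> vv x \<le> real P"
    and outd: "\<forall>x\<in>X. out x = (vv x - O') / q'"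
begin

definition "PK = {..<d} \<times> {..d}"
definition "KK = {..d}"
definition "Bu = Bu0 + 1"
definition "Ms = real d + 1"
definition "ph = (\<lambda>m k x. phq (u m k x))"
definition "gg = (\<lambda>m k x. gq (u m k x))"
definition "bb = (\<lambda>m k x. bq (u m k x))"
definition "m1 = (\<lambda>m k x. m1q Ms (u m k x))"
definition "\<beta> = beta d u"
definition "Z = Zf d u"
definition "\<omega> = omg d u"
definition "W = Wf d u"
definition "cr = crf d M u"
definition "G = Gf d M u t \<gamma>"
definition "ll = ellf d M u t \<gamma> P"
definition "\<tau> = tau d"
definition "V = (\<lambda>x. \<Sum>k\<le>d. \<omega> k x * ll k x)"
definition "tw = (\<lambda>x. \<tau> / W x)"

lemma finPK: "finite PK" "card PK = d * (d + 1)" by (auto simp: PK_def card_cartesian_product)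
lemma finKK: "finite KK" "card KK = d + 1" by (auto simp: KK_def)

lemma ubx: "x \<in> X \<Longrightarrow> k \<le> d \<Longrightarrow> 2 \<le> u m k x \<and> u m k x \<le> Bu0"
  using ub by blast

lemma Bu: "Bu > 0" "x \<in> X \<Longrightarrow> k \<le> d \<Longrightarrow> \<bar>u m k x\<bar> \<le> Bu"
proof -
  show "Bu > 0" using Bu0 by (simp add: Bu_def)
  assume "x \<in> X" "k \<le> d"
  then have "2 \<le> u m k x" "u m k x \<le> Bu0" using ubx by auto
  then show "\<bar>u m k x\<bar> \<le> Bu" unfolding Bu_def by linarith
qed

lemma Ms: "Ms \<ge> 1" by (simp add: Ms_def)

lemma \<tau>: "\<tau> > 0" "\<tau> \<le> 1/8" "(real d + 1) * \<tau> = 1/4"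
  unfolding \<tau>_def tau_def using d1 by (auto simp: field_simps)

lemma aab: "0 \<le> aa d" "aa d \<le> 1/2" unfolding aa_def by (auto simp: field_simps)

lemma \<beta>b: "0 \<le> \<beta> m k x" "\<beta> m k x \<le> 1/2"
  using gq_range[of "u m k x"] aab unfolding \<beta>_def beta_def by (auto simp: max_def)

lemma sum\<beta>: "0 \<le> (\<Sum>m<d. \<beta> m k x)" "(\<Sum>m<d. \<beta> m k x) \<le> real d / 2"
proof -
  show "0 \<le> (\<Sum>m<d. \<beta> m k x)" using \<beta>b by (intro sum_nonneg) auto
  have "(\<Sum>m<d. \<beta> m k x) \<le> (\<Sum>m<d. 1/2)" using \<beta>b by (intro sum_mono) auto
  then show "(\<Sum>m<d. \<beta> m k x) \<le> real d / 2" by simp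
qed

lemma Zeq: "Z k x = \<tau> - (\<Sum>m<d. \<beta> m k x)" by (simp add: Z_def Zf_def \<tau>_def \<beta>_def)
lemma \<omega>eq: "\<omega> k x = max 0 (Z k x)" by (simp add: \<omega>_def omg_def Z_def)

lemma \<omega>b: "0 \<le> \<omega> k x" "\<omega> k x \<le> \<tau>"
  using sum\<beta>[of k x] \<tau> unfolding \<omega>eq Zeq by (auto simp: max_def)

lemma Zb: "\<bar>Z k x\<bar> \<le> real d + 1"
  using sum\<beta>[of k x] \<tau> unfolding Zeq abs_le_iff by auto

lemma Wlow: "x \<in> X \<Longrightarrow> W x \<ge> \<tau>"
proof -
  assume x: "x \<in> X"
  obtain k where k: "k \<le> d" "\<forall>m<d. \<not> badu d ((x $ \<xi> m / hh + c0) + real k / (real d + 1))"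
    using good_shift[of d "\<lambda>m. x $ \<xi> m / hh + c0"] by blast
  have b0: "\<beta> m k x = 0" if "m < d" for m
  proof -
    have "\<not> badu d (u m k x)" using k that by (simp add: u_def)
    then have "\<bar>u m k x - of_int (rnd (u m k x))\<bar> \<le> aa d" unfolding badu_def aa_def by (simp add: not_less)
    then have "gq (u m k x) / 2 \<le> aa d" by (simp add: gq_eq)
    then show ?thesis by (simp add: \<beta>_def beta_def max_def)
  qed
  have "(\<Sum>m<d. \<beta> m k x) = 0" using b0 by simp
  then have "\<omega> k x = \<tau>" using \<tau> unfolding \<omega>eq Zeq by simp
  moreover have "\<omega> k x \<le> W x"
    unfolding W_def Wf_def \<omega>_def[symmetric] using k \<omega>b by (intro member_le_sum) auto
  ultimately show ?thesis by simp
qed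

lemma Wup: "W x \<le> 1/4"
proof -
  have "W x \<le> (\<Sum>k\<le>d. \<tau>)" unfolding W_def Wf_def \<omega>_def[symmetric] using \<omega>b by (intro sum_mono) auto
  moreover have "(\<Sum>k\<le>d. \<tau>) = (real d + 1) * \<tau>" by simp
  ultimately show ?thesis using \<tau>(3) by linarith
qed

lemma Veq: "x \<in> X \<Longrightarrow> V x = vv x * W x"
proof -
  assume x: "x \<in> X"
  have "V x = (\<Sum>k\<le>d. \<omega> k x * vv x)" unfolding V_def
    by (rule sum.cong) (use sem x in \<open>auto simp: \<omega>_def ll_def\<close>)
  then show ?thesis by (simp add: W_def Wf_def \<omega>_def sum_distrib_left mult.commute)
qed

lemma Vb: "x \<in> X \<Longrightarrow> \<bar>V x\<bar> \<le> real P"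
proof -
  assume x: "x \<in> X"
  have w: "\<tau> \<le> W x" "W x \<le> 1/4" using Wlow[OF x] Wup by auto
  have "0 \<le> vv x * W x" using vvb x w \<tau> by simp
  moreover have "vv x * W x \<le> real P * 1" using vvb x w \<tau> by (intro mult_mono) auto
  ultimately show ?thesis using Veq[OF x] by simp
qed

lemma twb: "x \<in> X \<Longrightarrow> 0 < tw x \<and> tw x \<le> 1"
  using Wlow[of x] \<tau> by (auto simp: tw_def divide_le_eq_1)

lemma twV: "x \<in> X \<Longrightarrow> tw x * V x = \<tau> * vv x"
  using Veq[of x] Wlow[of x] \<tau> by (simp add: tw_def)

lemma Wrec: "x \<in> X \<Longrightarrow> W x / \<tau> - 1 \<ge> 0 \<and> 1 / ((W x / \<tau> - 1) + 1) = tw x"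
  using Wlow[of x] \<tau> by (simp add: tw_def)

end


lemma reach_step':
  "reach N X k S \<Longrightarrow> k' = Suc k \<Longrightarrow> finite T \<Longrightarrow> card T \<le> N \<Longrightarrow> \<forall>g\<in>T. nrn X S g \<Longrightarrow> reach N X k' T"
  unfolding nrn_def using reach_step by blast

lemma card3:
  assumes "finite A" "finite B" "finite D3" "card A \<le> a" "card B \<le> b" "card D3 \<le> c"
  shows "card (A \<union> B \<union> D3) \<le> a + b + c" "finite (A \<union> B \<union> D3)"
proof -
  have "card (A \<union> B \<union> D3) \<le> card (A \<union> B) + card D3" by (rule card_Un_le)
  also have "\<dots> \<le> card A + card B + card D3" using card_Un_le[of A B] by simp
  finally show "card (A \<union> B \<union> D3) \<le> a + b + c" using assms by simp
  show "finite (A \<union> B \<union> D3)" using assms by simp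
qed

context NETL
begin

definition "L0 = (\<lambda>m k. [\<lambda>x. act (2 * u m k x + 1/2), \<lambda>x. act (2 * u m k x), car Bu (u m k)])"
definition "T0 = (\<Union>p\<in>PK. set (L0 (fst p) (snd p)))"

lemma affu: "aff1 (u m k)"
  unfolding aff1_def u_def by (intro exI[of _ "1 / hh"] exI[of _ "c0 + real k / (real d + 1)"] exI[of _ "\<xi> m"])
    (simp add: field_simps)

lemma r0: "reach N X 0 T0"
proof (rule reach_base)
  show "finite T0" unfolding T0_def using finPK by auto
  have "card T0 \<le> 3 * card PK" unfolding T0_def by (rule card_UN_list) (auto simp: finPK L0_def)
  then show "card T0 \<le> N" using card_le_N[OF d1 NN, of 3 0 0] finPK by simp
  show "\<forall>g\<in>T0. \<exists>a c. \<forall>x\<in>X. g x = act ((\<Sum>j\<in>UNIV. a j * x $ j) + c)"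
    unfolding T0_def
  proof (rule allU)
    fix m k
    have a1: "aff1 (\<lambda>x. 2 * u m k x + 1/2)" using affu by (rule aff1_affine)
    have a2: "aff1 (\<lambda>x. 2 * u m k x + 0)" using affu by (rule aff1_affine)
    have "\<exists>a c. \<forall>x\<in>X. act (2 * u m k x + 1/2) = act ((\<Sum>j\<in>UNIV. a j * x $ j) + c)"
      using aff1_base[OF a1] by simp
    moreover have "\<exists>a c. \<forall>x\<in>X. act (2 * u m k x) = act ((\<Sum>j\<in>UNIV. a j * x $ j) + c)"
      using aff1_base[OF a2] by simp
    moreover have "\<exists>a c. \<forall>x\<in>X. car Bu (u m k) x = act ((\<Sum>j\<in>UNIV. a j * x $ j) + c)"
      by (rule aff1_car[OF affu])
    ultimately show "\<forall>g\<in>set (L0 m k). \<exists>a c. \<forall>x\<in>X. g x = act ((\<Sum>j\<in>UNIV. a j * x $ j) + c)"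
      unfolding L0_def by simp
  qed
qed

lemma mem0: "(m, k) \<in> PK \<Longrightarrow> g \<in> set (L0 m k) \<Longrightarrow> g \<in> T0"
  unfolding T0_def by (rule memU)

lemma PKd: "(m, k) \<in> PK \<Longrightarrow> k \<le> d" by (simp add: PK_def)

lemma l0u: "(m, k) \<in> PK \<Longrightarrow> linc X T0 (u m k)"
  by (rule lin_car[of Bu]) (auto intro: mem0 simp: L0_def Bu PKd)

lemma l0ph: assumes mk: "(m, k) \<in> PK" shows "linc X T0 (ph m k)"
proof -
  have "linc X T0 (\<lambda>x. (1/2) * act (2 * u m k x + 1/2) + (- 1/4))"
    by (intro linc_affine linc.mem mem0[OF mk]) (simp add: L0_def)
  moreover have "\<forall>x\<in>X. (1/2) * act (2 * u m k x + 1/2) + (- 1/4) = ph m k x"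
  proof
    fix x assume "x \<in> X"
    then have "2 \<le> u m k x" using ubx PKd[OF mk] by blast
    then show "(1/2) * act (2 * u m k x + 1/2) + (- 1/4) = ph m k x"
      by (simp add: ph_def phq_def act_nonneg)
  qed
  ultimately show ?thesis by (rule linc_cong')
qed

lemma l0g: assumes mk: "(m, k) \<in> PK" shows "linc X T0 (gg m k)"
proof -
  have "linc X T0 (\<lambda>x. act (2 * u m k x))"
    by (intro linc.mem mem0[OF mk]) (simp add: L0_def)
  moreover have "\<forall>x\<in>X. act (2 * u m k x) = gg m k x"
  proof
    fix x assume "x \<in> X"
    then have "2 \<le> u m k x" using ubx PKd[OF mk] by blast
    then show "act (2 * u m k x) = gg m k x" by (simp add: gg_def gq_def act_nonneg)
  qed
  ultimately show ?thesis by (rule linc_cong')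
qed

definition "L1 = (\<lambda>m k. [absn 1 (\<lambda>x. gg m k x / 2 - 1/4), absn 1 (\<lambda>x. gg m k x / 2 - aa d),
   car 1 (ph m k), car 1 (gg m k), car Bu (u m k)])"
definition "T1 = (\<Union>p\<in>PK. set (L1 (fst p) (snd p)))"

lemma r1: "reach N X 1 T1"
proof (rule reach_step'[OF r0])
  show "finite T1" unfolding T1_def using finPK by auto
  have "card T1 \<le> 5 * card PK" unfolding T1_def by (rule card_UN_list) (auto simp: finPK L1_def)
  then show "card T1 \<le> N" using card_le_N[OF d1 NN, of 5 0 0] finPK by simp
  show "\<forall>g\<in>T1. nrn X T0 g"
    unfolding T1_def
  proof (rule allU)
    fix m k assume mk: "(m, k) \<in> PK"
    have lg: "linc X T0 (\<lambda>x. gg m k x / 2 - 1/4)" "linc X T0 (\<lambda>x. gg m k x / 2 - aa d)"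
      by (rule linc_cong'[OF linc_affine[OF l0g[OF mk], of "1/2" "-1/4"]], simp)
         (rule linc_cong'[OF linc_affine[OF l0g[OF mk], of "1/2" "- aa d"]], simp)
    have "nrn X T0 (absn 1 (\<lambda>x. gg m k x / 2 - 1/4))" "nrn X T0 (absn 1 (\<lambda>x. gg m k x / 2 - aa d))"
      using lg by (auto intro: nrn_absn)
    moreover have "nrn X T0 (car 1 (ph m k))" "nrn X T0 (car 1 (gg m k))" "nrn X T0 (car Bu (u m k))"
      using l0ph[OF mk] l0g[OF mk] l0u[OF mk] by (auto intro: nrn_car)
    ultimately show "\<forall>g\<in>set (L1 m k). nrn X T0 g" unfolding L1_def by simp
  qed
qed simp

lemma mem1: "(m, k) \<in> PK \<Longrightarrow> g \<in> set (L1 m k) \<Longrightarrow> g \<in> T1"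
  unfolding T1_def by (rule memU)

lemma phb: "\<bar>ph m k x\<bar> \<le> 1/4" using phq_range[of "u m k x"] by (auto simp: ph_def)
lemma gb: "0 \<le> gg m k x" "gg m k x \<le> 1" using gq_range[of "u m k x"] by (auto simp: gg_def)
lemma bbb: "0 \<le> bb m k x" "bb m k x \<le> 1/4" using bq_range[of "u m k x"] by (auto simp: bb_def)

lemma l1u: "(m, k) \<in> PK \<Longrightarrow> linc X T1 (u m k)"
  by (rule lin_car[of Bu]) (auto intro: mem1 simp: L1_def Bu PKd)
lemma l1ph: "(m, k) \<in> PK \<Longrightarrow> linc X T1 (ph m k)"
  by (rule lin_car[of 1]) (auto intro: mem1 simp: L1_def order_trans[OF phb])
lemma l1g: "(m, k) \<in> PK \<Longrightarrow> linc X T1 (gg m k)"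
  by (rule lin_car[of 1]) (auto intro: mem1 simp: L1_def gb abs_le_iff)

lemma l1relu:
  assumes mk: "(m, k) \<in> PK" and e: "e = 1/4 \<or> e = aa d"
  shows "linc X T1 (\<lambda>x. max 0 (gg m k x / 2 - e))"
proof -
  have z: "linc X T1 (\<lambda>x. (1/2) * gg m k x + (- e))" using l1g[OF mk] by (rule linc_affine)
  have "absn 1 (\<lambda>x. gg m k x / 2 - e) \<in> set (L1 m k)" using e by (elim disjE; hypsubst; simp add: L1_def)
  then have "absn 1 (\<lambda>x. gg m k x / 2 - e) \<in> T1" by (rule mem1[OF mk])
  then have "linc X T1 (\<lambda>x. \<bar>gg m k x / 2 - e\<bar>)"
  proof (rule lin_absn)
    have e01: "0 \<le> e" "e \<le> 1/2" using e aab by auto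
    show "\<forall>x\<in>X. \<bar>gg m k x / 2 - e\<bar> \<le> 1"
    proof
      fix x show "\<bar>gg m k x / 2 - e\<bar> \<le> 1" using gb[of m k x] e01 unfolding abs_le_iff by linarith
    qed
  qed simp
  then have "linc X T1 (\<lambda>x. (1/2) * ((1/2) * gg m k x + (- e)) + (1/2) * \<bar>gg m k x / 2 - e\<bar>)"
    by (rule linc.add[OF linc.scale[OF z] linc.scale])
  then show ?thesis by (rule linc_cong') (auto simp: max0_abs)
qed

lemma l1bb: "(m, k) \<in> PK \<Longrightarrow> linc X T1 (bb m k)"
  by (rule linc_cong'[OF l1relu[of m k "1/4"]]) (auto simp: bb_def bq_def gg_def)
lemma l1\<beta>: "(m, k) \<in> PK \<Longrightarrow> linc X T1 (\<beta> m k)"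
  by (rule linc_cong'[OF l1relu[of m k "aa d"]]) (auto simp: \<beta>_def beta_def gg_def)

end


context NETL
begin

definition "Bm = Ms + 1"
definition "L2 = (\<lambda>m k. [absn Bm (\<lambda>x. bb m k x - Ms * ph m k x), car 1 (bb m k), car 1 (ph m k), car Bu (u m k)])"
definition "LK2 = (\<lambda>k. [absn (real d + 1) (Z k), car (real d + 1) (Z k)])"
definition "T2 = (\<Union>p\<in>PK. set (L2 (fst p) (snd p))) \<union> (\<Union>k\<in>KK. set (LK2 k)) \<union> {}"

lemma PKI: "m < d \<Longrightarrow> k \<le> d \<Longrightarrow> (m, k) \<in> PK" by (simp add: PK_def)
lemma KKd: "k \<in> KK \<longleftrightarrow> k \<le> d" by (simp add: KK_def)

lemma l1Z: "k \<le> d \<Longrightarrow> linc X T1 (Z k)"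
proof -
  assume k: "k \<le> d"
  have "linc X T1 (\<lambda>x. (-1) * (\<Sum>m\<in>{..<d}. \<beta> m k x) + \<tau>)"
    by (intro linc_affine linc_sum) (auto intro: l1\<beta> PKI k)
  then show ?thesis by (rule linc_cong') (simp add: Zeq)
qed

lemma r2: "reach N X 2 T2"
proof (rule reach_step'[OF r1])
  have c: "card (\<Union>p\<in>PK. set (L2 (fst p) (snd p))) \<le> 4 * card PK" by (rule card_UN_list) (auto simp: finPK L2_def)
  have c2: "card (\<Union>k\<in>KK. set (LK2 k)) \<le> 2 * card KK" by (rule card_UN_list) (auto simp: finKK LK2_def)
  have "card T2 \<le> 4 * card PK + 2 * card KK + 0" "finite T2" unfolding T2_def
    by (rule card3; use c c2 finPK finKK in auto)+
  then show "finite T2" "card T2 \<le> N" using card_le_N[OF d1 NN, of 4 2 0] finPK finKK by auto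
  show "\<forall>f\<in>T2. nrn X T1 f"
    unfolding T2_def Un_empty_right ball_Un
  proof
    show "\<forall>f\<in>(\<Union>p\<in>PK. set (L2 (fst p) (snd p))). nrn X T1 f"
    proof (rule allU)
      fix m k assume mk: "(m, k) \<in> PK"
      have "linc X T1 (\<lambda>x. bb m k x - Ms * ph m k x)"
        using l1bb[OF mk] l1ph[OF mk] by (intro linc_diff linc.scale)
      then show "\<forall>f\<in>set (L2 m k). nrn X T1 f" unfolding L2_def
        using l1bb[OF mk] l1ph[OF mk] l1u[OF mk] by (auto intro: nrn_absn nrn_car)
    qed
    show "\<forall>f\<in>(\<Union>k\<in>KK. set (LK2 k)). nrn X T1 f"
    proof (rule allK)
      fix k assume "k \<in> KK"
      then have "linc X T1 (Z k)" by (intro l1Z) (simp add: KKd)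
      then show "\<forall>f\<in>set (LK2 k). nrn X T1 f" unfolding LK2_def by (auto intro: nrn_absn nrn_car)
    qed
  qed
qed simp

lemma mem2: "(m, k) \<in> PK \<Longrightarrow> f \<in> set (L2 m k) \<Longrightarrow> f \<in> T2"
  unfolding T2_def by (intro UnI1 memU)
lemma memK2: "k \<le> d \<Longrightarrow> f \<in> set (LK2 k) \<Longrightarrow> f \<in> T2"
  unfolding T2_def by (intro UnI1 UnI2 memK) (auto simp: KKd)

lemma l2u: "(m, k) \<in> PK \<Longrightarrow> linc X T2 (u m k)"
  by (rule lin_car[of Bu]) (auto intro: mem2 simp: L2_def Bu PKd)
lemma l2ph: "(m, k) \<in> PK \<Longrightarrow> linc X T2 (ph m k)"
  by (rule lin_car[of 1]) (auto intro: mem2 simp: L2_def order_trans[OF phb])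
lemma l2bb: "(m, k) \<in> PK \<Longrightarrow> linc X T2 (bb m k)"
  by (rule lin_car[of 1]) (auto intro: mem2 simp: L2_def abs_le_iff order_trans[OF bbb(2)] order_trans[OF _ bbb(1)])

lemma diffb: "\<bar>bb m k x - Ms * ph m k x\<bar> \<le> Bm"
proof -
  have "\<bar>ph m k x\<bar> \<le> 1/4" by (rule phb)
  then have "Ms * \<bar>ph m k x\<bar> \<le> Ms * (1/4)" using Ms by (intro mult_left_mono) auto
  then have "\<bar>Ms * ph m k x\<bar> \<le> Ms" using Ms by (simp add: abs_mult)
  then show ?thesis using bbb[of m k x] unfolding Bm_def abs_le_iff by linarith
qed

lemma l2m1: assumes mk: "(m, k) \<in> PK" shows "linc X T2 (m1 m k)"
proof -
  have Bm: "Bm > 0" using Ms by (simp add: Bm_def)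
  have "absn Bm (\<lambda>x. bb m k x - Ms * ph m k x) \<in> T2" by (rule mem2[OF mk]) (simp add: L2_def)
  then have a: "linc X T2 (\<lambda>x. \<bar>bb m k x - Ms * ph m k x\<bar>)"
    by (rule lin_absn) (use Bm diffb in auto)
  have "linc X T2 (\<lambda>x. (1/2) * bb m k x + (1/2) * (Ms * ph m k x) + (- 1/2) * \<bar>bb m k x - Ms * ph m k x\<bar>)"
    using l2bb[OF mk] l2ph[OF mk] a by (intro linc.add linc.scale)
  then show ?thesis by (rule linc_cong') (auto simp: m1_def m1q_def min_abs bb_def ph_def)
qed

lemma l2\<omega>: assumes k: "k \<le> d" shows "linc X T2 (\<omega> k)"
proof -
  have z: "linc X T2 (Z k)" by (rule lin_car[of "real d + 1"]) (auto intro: memK2[OF k] simp: LK2_def Zb)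
  have "absn (real d + 1) (Z k) \<in> T2" by (rule memK2[OF k]) (simp add: LK2_def)
  then have a: "linc X T2 (\<lambda>x. \<bar>Z k x\<bar>)" by (rule lin_absn) (auto simp: Zb)
  have "linc X T2 (\<lambda>x. (1/2) * Z k x + (1/2) * \<bar>Z k x\<bar>)" using z a by (intro linc.add linc.scale)
  then show ?thesis by (rule linc_cong') (auto simp: \<omega>eq max0_abs)
qed

definition "Bm2 = Ms + 2"
definition "L3 = (\<lambda>m k. [absn Bm2 (\<lambda>x. m1 m k x + bb m k x), car Bm2 (m1 m k), car 1 (bb m k), car 1 (ph m k), car Bu (u m k)])"
definition "LK3 = (\<lambda>k. [car 1 (\<omega> k)])"
definition "G3 = [recn (\<lambda>x. W x / \<tau> - 1)]"
definition "T3 = (\<Union>p\<in>PK. set (L3 (fst p) (snd p))) \<union> (\<Union>k\<in>KK. set (LK3 k)) \<union> set G3"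

lemma l2W: "linc X T2 W"
proof -
  have "linc X T2 (\<lambda>x. \<Sum>k\<in>{..d}. \<omega> k x)" by (intro linc_sum l2\<omega>) auto
  then show ?thesis by (rule linc_cong') (simp add: W_def Wf_def \<omega>_def)
qed

lemma r3: "reach N X 3 T3"
proof (rule reach_step'[OF r2])
  have c: "card (\<Union>p\<in>PK. set (L3 (fst p) (snd p))) \<le> 5 * card PK" by (rule card_UN_list) (auto simp: finPK L3_def)
  have c2: "card (\<Union>k\<in>KK. set (LK3 k)) \<le> 1 * card KK" by (rule card_UN_list) (auto simp: finKK LK3_def)
  have c3: "card (set G3) \<le> 1" by (simp add: G3_def)
  have "card T3 \<le> 5 * card PK + 1 * card KK + 1" "finite T3" unfolding T3_def
    by (rule card3; use c c2 c3 finPK finKK in auto)+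
  then show "finite T3" "card T3 \<le> N" using card_le_N[OF d1 NN, of 5 1 1] finPK finKK by auto
  show "\<forall>f\<in>T3. nrn X T2 f"
    unfolding T3_def ball_Un
  proof (intro conjI)
    show "\<forall>f\<in>(\<Union>p\<in>PK. set (L3 (fst p) (snd p))). nrn X T2 f"
    proof (rule allU)
      fix m k assume mk: "(m, k) \<in> PK"
      have "linc X T2 (\<lambda>x. m1 m k x + bb m k x)" using l2m1[OF mk] l2bb[OF mk] by (rule linc.add)
      then show "\<forall>f\<in>set (L3 m k). nrn X T2 f" unfolding L3_def
        using l2m1[OF mk] l2bb[OF mk] l2ph[OF mk] l2u[OF mk] by (auto intro: nrn_absn nrn_car)
    qed
    show "\<forall>f\<in>(\<Union>k\<in>KK. set (LK3 k)). nrn X T2 f"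
    proof (rule allK)
      fix k assume "k \<in> KK"
      then have "linc X T2 (\<omega> k)" by (intro l2\<omega>) (simp add: KKd)
      then show "\<forall>f\<in>set (LK3 k). nrn X T2 f" unfolding LK3_def by (auto intro: nrn_car)
    qed
    have "linc X T2 (\<lambda>x. (1 / \<tau>) * W x + (-1))" using l2W by (rule linc_affine)
    then have "linc X T2 (\<lambda>x. W x / \<tau> - 1)" by (rule linc_cong') auto
    then show "\<forall>f\<in>set G3. nrn X T2 f" unfolding G3_def by (auto intro: nrn_recn)
  qed
qed simp

lemma mem3: "(m, k) \<in> PK \<Longrightarrow> f \<in> set (L3 m k) \<Longrightarrow> f \<in> T3"
  unfolding T3_def by (intro UnI1 memU)
lemma memK3: "k \<le> d \<Longrightarrow> f \<in> set (LK3 k) \<Longrightarrow> f \<in> T3"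
  unfolding T3_def by (intro UnI1 UnI2 memK) (auto simp: KKd)
lemma memG3: "f \<in> set G3 \<Longrightarrow> f \<in> T3"
  unfolding T3_def by (intro UnI2)

lemma m1b: "\<bar>m1 m k x\<bar> \<le> Ms + 1" using m1q_bound[of Ms "u m k x"] Ms by (simp add: m1_def)

lemma l3u: "(m, k) \<in> PK \<Longrightarrow> linc X T3 (u m k)"
  by (rule lin_car[of Bu]) (auto intro: mem3 simp: L3_def Bu PKd)
lemma l3ph: "(m, k) \<in> PK \<Longrightarrow> linc X T3 (ph m k)"
  by (rule lin_car[of 1]) (auto intro: mem3 simp: L3_def order_trans[OF phb])
lemma l3bb: "(m, k) \<in> PK \<Longrightarrow> linc X T3 (bb m k)"
  by (rule lin_car[of 1]) (auto intro: mem3 simp: L3_def abs_le_iff order_trans[OF bbb(2)] order_trans[OF _ bbb(1)])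
lemma l3m1: "(m, k) \<in> PK \<Longrightarrow> linc X T3 (m1 m k)"
  by (rule lin_car[of Bm2]) (use Ms in \<open>auto intro: mem3 simp: L3_def Bm2_def order_trans[OF m1b]\<close>)

lemma l3S: assumes mk: "(m, k) \<in> PK" shows "linc X T3 (\<lambda>x. Sq Ms (u m k x))"
proof -
  have Bm2: "Bm2 > 0" using Ms by (simp add: Bm2_def)
  have "absn Bm2 (\<lambda>x. m1 m k x + bb m k x) \<in> T3" by (rule mem3[OF mk]) (simp add: L3_def)
  then have a: "linc X T3 (\<lambda>x. \<bar>m1 m k x + bb m k x\<bar>)"
  proof (rule lin_absn[OF _ Bm2])
    show "\<forall>x\<in>X. \<bar>m1 m k x + bb m k x\<bar> \<le> Bm2"
    proof
      fix x show "\<bar>m1 m k x + bb m k x\<bar> \<le> Bm2"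
        using m1b[of m k x] bbb[of m k x] unfolding Bm2_def abs_le_iff by linarith
    qed
  qed
  have "linc X T3 (\<lambda>x. u m k x + (-1) * ph m k x + bb m k x + (-1) * m1 m k x + (-1) * \<bar>m1 m k x + bb m k x\<bar>)"
    using l3u[OF mk] l3ph[OF mk] l3bb[OF mk] l3m1[OF mk] a by (intro linc.add linc.scale)
  moreover have "\<forall>x\<in>X. u m k x + (-1) * ph m k x + bb m k x + (-1) * m1 m k x + (-1) * \<bar>m1 m k x + bb m k x\<bar> = Sq Ms (u m k x)"
  proof
    fix x
    have "max (- bb m k x) (m1 m k x) = (- bb m k x + m1 m k x + \<bar>m1 m k x + bb m k x\<bar>) / 2"
      by (auto simp: max_def abs_if)
    then show "u m k x + (-1) * ph m k x + bb m k x + (-1) * m1 m k x + (-1) * \<bar>m1 m k x + bb m k x\<bar> = Sq Ms (u m k x)"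
      by (simp add: Sq_def psiq_def m1_def bb_def ph_def)
  qed
  ultimately show ?thesis by (rule linc_cong')
qed

lemma l3cr: assumes k: "k \<le> d" shows "linc X T3 (cr k)"
proof -
  have "linc X T3 (\<lambda>x. (\<Sum>m\<in>{..<d}. real M ^ m * Sq Ms (u m k x)) + real k * real M ^ d)"
    by (intro linc.add linc_sum linc.scale linc.const l3S PKI k) auto
  then show ?thesis by (rule linc_cong') (simp add: cr_def crf_def Ms_def mult.commute)
qed

lemma \<omega>b1: "\<bar>\<omega> k x\<bar> \<le> 1" using \<omega>b[of k x] \<tau> by auto

lemma l3\<omega>: "k \<le> d \<Longrightarrow> linc X T3 (\<omega> k)"
  by (rule lin_car[of 1]) (auto intro: memK3 simp: LK3_def \<omega>b1)

lemma l3tw: "linc X T3 tw"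
proof -
  have "linc X T3 (\<lambda>x. 1 / ((W x / \<tau> - 1) + 1))"
  proof (rule lin_recn)
    show "recn (\<lambda>x. W x / \<tau> - 1) \<in> T3" by (rule memG3) (simp add: G3_def)
    show "\<forall>x\<in>X. 0 \<le> W x / \<tau> - 1" using Wrec by blast
  qed
  then show ?thesis by (rule linc_cong') (auto simp: tw_def)
qed

end


lemma pp_lin:
  fixes p :: "real^'d::finite \<Rightarrow> real" and c :: real
  assumes "\<forall>x\<in>X. 1 \<le> p x \<and> p x * (p x + 1) \<le> c"
    and "linc X S (\<lambda>x. 1 / ((c * (1 / p x - 1 / (p x + 1)) - 1) + 1))"
  shows "linc X S (\<lambda>x. p x * (p x + 1))"
proof -
  have "linc X S (\<lambda>x. c * (1 / ((c * (1 / p x - 1 / (p x + 1)) - 1) + 1)))" using assms(2) by (rule linc.scale)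
  then show ?thesis by (rule linc_cong') (use assms(1) recip_recip(2) in auto)
qed

lemma pp_nonneg:
  fixes p :: "'a \<Rightarrow> real" and c :: real
  assumes a: "\<forall>x\<in>X. 1 \<le> p x \<and> p x * (p x + 1) \<le> c"
  shows "\<forall>x\<in>X. 0 \<le> c * (1 / p x - 1 / (p x + 1)) - 1"
proof
  fix x assume "x \<in> X"
  then have "1 \<le> p x" "p x * (p x + 1) \<le> c" using a by auto
  then show "0 \<le> c * (1 / p x - 1 / (p x + 1)) - 1" by (rule recip_recip(1))
qed

context NETL
begin

lemma cr_nonneg: assumes "x \<in> X" "k \<le> d" shows "cr k x \<ge> 0"
proof -
  have "Sq Ms (u m k x) \<ge> 0" for m
  proof -
    have "psiq Ms (u m k x) \<le> 3/4" using psiq_bound[of Ms "u m k x"] unfolding abs_le_iff by linarith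
    then show ?thesis using ubx[OF assms, of m] by (simp add: Sq_def)
  qed
  then have "(\<Sum>m<d. Sq (real d + 1) (u m k x) * real M ^ m) \<ge> 0" by (intro sum_nonneg) (simp add: Ms_def)
  then show ?thesis by (simp add: cr_def crf_def)
qed

definition "LK4 = (\<lambda>k. [recn (\<lambda>x. cr k x + \<gamma> - 1), car 1 (\<omega> k)])"
definition "G4 = [car 1 tw]"
definition "T4 = {} \<union> (\<Union>k\<in>KK. set (LK4 k)) \<union> set G4"

lemma r4: "reach N X 4 T4"
proof (rule reach_step'[OF r3])
  have c2: "card (\<Union>k\<in>KK. set (LK4 k)) \<le> 2 * card KK" by (rule card_UN_list) (auto simp: finKK LK4_def)
  have c3: "card (set G4) \<le> 1" by (simp add: G4_def)
  have "card T4 \<le> 0 + 2 * card KK + 1" "finite T4" unfolding T4_def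
    by (rule card3; use c2 c3 finKK in auto)+
  then show "finite T4" "card T4 \<le> N" using card_le_N[OF d1 NN, of 0 2 1] finKK by auto
  show "\<forall>f\<in>T4. nrn X T3 f"
    unfolding T4_def ball_Un
  proof (intro conjI)
    show "\<forall>f\<in>{}. nrn X T3 f" by simp
    show "\<forall>f\<in>(\<Union>k\<in>KK. set (LK4 k)). nrn X T3 f"
    proof (rule allK)
      fix k assume "k \<in> KK"
      then have k: "k \<le> d" by (simp add: KKd)
      have "linc X T3 (\<lambda>x. 1 * cr k x + (\<gamma> - 1))" by (rule linc_affine[OF l3cr[OF k]])
      then have "linc X T3 (\<lambda>x. cr k x + \<gamma> - 1)" by (rule linc_cong') auto
      then show "\<forall>f\<in>set (LK4 k). nrn X T3 f" unfolding LK4_def using l3\<omega>[OF k] by (auto intro: nrn_recn nrn_car)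
    qed
    show "\<forall>f\<in>set G4. nrn X T3 f" unfolding G4_def using l3tw by (auto intro: nrn_car)
  qed
qed simp

lemma memK4: "k \<le> d \<Longrightarrow> f \<in> set (LK4 k) \<Longrightarrow> f \<in> T4"
  unfolding T4_def by (intro UnI1 UnI2 memK) (auto simp: KKd)
lemma memG4: "f \<in> set G4 \<Longrightarrow> f \<in> T4"
  unfolding T4_def by (intro UnI2)

lemma twb1: "x \<in> X \<Longrightarrow> \<bar>tw x\<bar> \<le> 1" using twb[of x] by auto

lemma l4rc: assumes k: "k \<le> d" shows "linc X T4 (\<lambda>x. 1 / (cr k x + \<gamma>))"
proof -
  have "linc X T4 (\<lambda>x. 1 / ((cr k x + \<gamma> - 1) + 1))"
  proof (rule lin_recn)
    show "recn (\<lambda>x. cr k x + \<gamma> - 1) \<in> T4" by (rule memK4[OF k]) (simp add: LK4_def)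
    show "\<forall>x\<in>X. 0 \<le> cr k x + \<gamma> - 1" using cr_nonneg k \<gamma> by force
  qed
  then show ?thesis by (rule linc_cong') auto
qed
lemma l4\<omega>: "k \<le> d \<Longrightarrow> linc X T4 (\<omega> k)"
  by (rule lin_car[of 1]) (auto intro: memK4 simp: LK4_def \<omega>b1)
lemma l4tw: "linc X T4 tw"
  by (rule lin_car[of 1]) (auto intro: memG4 simp: G4_def twb1)

definition "tm = \<lceil>\<bar>t\<bar>\<rceil>"
definition "LK5 = (\<lambda>k. [\<lambda>x. act (t * (1 / (cr k x + \<gamma>)) + 2 * of_int tm), car 1 (\<omega> k)])"
definition "G5 = [car 1 tw]"
definition "T5 = {} \<union> (\<Union>k\<in>KK. set (LK5 k)) \<union> set G5"

lemma r5: "reach N X 5 T5"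
proof (rule reach_step'[OF r4])
  have c2: "card (\<Union>k\<in>KK. set (LK5 k)) \<le> 2 * card KK" by (rule card_UN_list) (auto simp: finKK LK5_def)
  have c3: "card (set G5) \<le> 1" by (simp add: G5_def)
  have "card T5 \<le> 0 + 2 * card KK + 1" "finite T5" unfolding T5_def
    by (rule card3; use c2 c3 finKK in auto)+
  then show "finite T5" "card T5 \<le> N" using card_le_N[OF d1 NN, of 0 2 1] finKK by auto
  show "\<forall>f\<in>T5. nrn X T4 f"
    unfolding T5_def ball_Un
  proof (intro conjI)
    show "\<forall>f\<in>{}. nrn X T4 f" by simp
    show "\<forall>f\<in>(\<Union>k\<in>KK. set (LK5 k)). nrn X T4 f"
    proof (rule allK)
      fix k assume "k \<in> KK"
      then have k: "k \<le> d" by (simp add: KKd)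
      have "linc X T4 (\<lambda>x. t * (1 / (cr k x + \<gamma>)) + 2 * of_int tm)" by (rule linc_affine[OF l4rc[OF k]])
      then show "\<forall>f\<in>set (LK5 k). nrn X T4 f" unfolding LK5_def using l4\<omega>[OF k] by (auto intro: nrn_act nrn_car)
    qed
    show "\<forall>f\<in>set G5. nrn X T4 f" unfolding G5_def using l4tw by (auto intro: nrn_car)
  qed
qed simp

lemma memK5: "k \<le> d \<Longrightarrow> f \<in> set (LK5 k) \<Longrightarrow> f \<in> T5"
  unfolding T5_def by (intro UnI1 UnI2 memK) (auto simp: KKd)
lemma memG5: "f \<in> set G5 \<Longrightarrow> f \<in> T5"
  unfolding T5_def by (intro UnI2)

lemma Geq: assumes "x \<in> X" "k \<le> d"
  shows "act (t * (1 / (cr k x + \<gamma>)) + 2 * of_int tm) = G k x"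
proof -
  have c: "cr k x + \<gamma> \<ge> 1" using cr_nonneg[OF assms] \<gamma> by simp
  have "\<bar>t / (cr k x + \<gamma>)\<bar> \<le> \<bar>t\<bar>"
  proof -
    have "\<bar>t / (cr k x + \<gamma>)\<bar> = \<bar>t\<bar> / (cr k x + \<gamma>)" using c by (simp add: abs_divide)
    also have "\<dots> \<le> \<bar>t\<bar> / 1" using c by (intro divide_left_mono) auto
    finally show ?thesis by simp
  qed
  moreover have "\<bar>t\<bar> \<le> of_int tm" unfolding tm_def by linarith
  ultimately have "0 \<le> t / (cr k x + \<gamma>) + 2 * of_int tm" by linarith
  then have "act (t / (cr k x + \<gamma>) + 2 * of_int tm) = sigma1 (t / (cr k x + \<gamma>))" by (rule act_period)
  then show ?thesis by (simp add: G_def Gf_def cr_def)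
qed

lemma l5G: assumes k: "k \<le> d" shows "linc X T5 (G k)"
proof -
  have "linc X T5 (\<lambda>x. act (t * (1 / (cr k x + \<gamma>)) + 2 * of_int tm))"
    by (intro linc.mem memK5[OF k]) (simp add: LK5_def)
  then show ?thesis by (rule linc_cong') (use Geq k in auto)
qed
lemma l5\<omega>: "k \<le> d \<Longrightarrow> linc X T5 (\<omega> k)"
  by (rule lin_car[of 1]) (auto intro: memK5 simp: LK5_def \<omega>b1)
lemma l5tw: "linc X T5 tw"
  by (rule lin_car[of 1]) (auto intro: memG5 simp: G5_def twb1)

definition "LK6 = (\<lambda>k. [\<lambda>x. act (2 * (real P * G k x) + 1/2), car 1 (G k), car 1 (\<omega> k)])"
definition "G6 = [car 1 tw]"
definition "T6 = {} \<union> (\<Union>k\<in>KK. set (LK6 k)) \<union> set G6"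

lemma r6: "reach N X 6 T6"
proof (rule reach_step'[OF r5])
  have c2: "card (\<Union>k\<in>KK. set (LK6 k)) \<le> 3 * card KK" by (rule card_UN_list) (auto simp: finKK LK6_def)
  have c3: "card (set G6) \<le> 1" by (simp add: G6_def)
  have "card T6 \<le> 0 + 3 * card KK + 1" "finite T6" unfolding T6_def
    by (rule card3; use c2 c3 finKK in auto)+
  then show "finite T6" "card T6 \<le> N" using card_le_N[OF d1 NN, of 0 3 1] finKK by auto
  show "\<forall>f\<in>T6. nrn X T5 f"
    unfolding T6_def ball_Un
  proof (intro conjI)
    show "\<forall>f\<in>{}. nrn X T5 f" by simp
    show "\<forall>f\<in>(\<Union>k\<in>KK. set (LK6 k)). nrn X T5 f"
    proof (rule allK)
      fix k assume "k \<in> KK"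
      then have k: "k \<le> d" by (simp add: KKd)
      have "linc X T5 (\<lambda>x. (2 * real P) * G k x + 1/2)" by (rule linc_affine[OF l5G[OF k]])
      then have "linc X T5 (\<lambda>x. 2 * (real P * G k x) + 1/2)" by (rule linc_cong') auto
      then show "\<forall>f\<in>set (LK6 k). nrn X T5 f" unfolding LK6_def using l5\<omega>[OF k] l5G[OF k]
        by (auto intro: nrn_act nrn_car)
    qed
    show "\<forall>f\<in>set G6. nrn X T5 f" unfolding G6_def using l5tw by (auto intro: nrn_car)
  qed
qed simp

lemma memK6: "k \<le> d \<Longrightarrow> f \<in> set (LK6 k) \<Longrightarrow> f \<in> T6"
  unfolding T6_def by (intro UnI1 UnI2 memK) (auto simp: KKd)
lemma memG6: "f \<in> set G6 \<Longrightarrow> f \<in> T6"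
  unfolding T6_def by (intro UnI2)

lemma Gb: "0 \<le> G k x" "G k x \<le> 1" using sigma1_range by (auto simp: G_def Gf_def)

lemma l6G: "k \<le> d \<Longrightarrow> linc X T6 (G k)"
  by (rule lin_car[of 1]) (auto intro: memK6 simp: LK6_def Gb abs_le_iff order_trans[OF _ Gb(1)])
lemma l6\<omega>: "k \<le> d \<Longrightarrow> linc X T6 (\<omega> k)"
  by (rule lin_car[of 1]) (auto intro: memK6 simp: LK6_def \<omega>b1)
lemma l6tw: "linc X T6 tw"
  by (rule lin_car[of 1]) (auto intro: memG6 simp: G6_def twb1)

lemma l6ll: assumes k: "k \<le> d" shows "linc X T6 (ll k)"
proof -
  have a: "linc X T6 (\<lambda>x. act (2 * (real P * G k x) + 1/2))"
    by (intro linc.mem memK6[OF k]) (simp add: LK6_def)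
  have "linc X T6 (\<lambda>x. real P * G k x + (- 1/2) * act (2 * (real P * G k x) + 1/2) + 1/4)"
    using l6G[OF k] a by (intro linc.add linc.scale linc.const)
  moreover have "\<forall>x\<in>X. real P * G k x + (- 1/2) * act (2 * (real P * G k x) + 1/2) + 1/4 = ll k x"
  proof
    fix x
    have "0 \<le> 2 * (real P * G k x) + 1/2" using Gb[of k x] by simp
    then show "real P * G k x + (- 1/2) * act (2 * (real P * G k x) + 1/2) + 1/4 = ll k x"
      by (simp add: act_nonneg ll_def ellf_def G_def phq_def)
  qed
  ultimately show ?thesis by (rule linc_cong')
qed

definition "Bp = real P + 1"
lemma llb: "\<bar>ll k x\<bar> \<le> Bp"
proof -
  have "0 \<le> real P * G k x" using Gb[of k x] by simp
  moreover have "real P * G k x \<le> real P * 1" using Gb[of k x] by (intro mult_left_mono) auto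
  moreover have "- 1/4 \<le> phq (real P * G k x)" "phq (real P * G k x) \<le> 1/4" using phq_range by auto
  ultimately show ?thesis unfolding ll_def ellf_def G_def[symmetric] Bp_def abs_le_iff by linarith
qed

end


context NETL
begin

definition "K0 = 2 * Bp + 1"
definition "pp = (\<lambda>k x. \<omega> k x + ll k x + K0)"
definition "mm = (\<lambda>k x. \<omega> k x - ll k x + K0)"
definition "Bq = 4 * Bp + 1"
definition "cc = Bq * (Bq + 1)"

lemma Bp1: "Bp \<ge> 1" by (simp add: Bp_def)

lemma pmb: "1 \<le> pp k x \<and> pp k x * (pp k x + 1) \<le> cc" "1 \<le> mm k x \<and> mm k x * (mm k x + 1) \<le> cc"
proof -
  have w: "0 \<le> \<omega> k x" "\<omega> k x \<le> 1/8" using \<omega>b[of k x] \<tau> by auto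
  have l: "\<bar>ll k x\<bar> \<le> Bp" by (rule llb)
  have gen: "1 \<le> q \<and> q * (q + 1) \<le> cc" if "1 \<le> q" "q \<le> Bq" for q
  proof -
    have "q * (q + 1) \<le> Bq * (Bq + 1)" using that by (intro mult_mono) auto
    then show ?thesis using that by (simp add: cc_def)
  qed
  show "1 \<le> pp k x \<and> pp k x * (pp k x + 1) \<le> cc"
    by (rule gen) (use w l Bp1 in \<open>auto simp: pp_def K0_def Bq_def abs_le_iff\<close>)
  show "1 \<le> mm k x \<and> mm k x * (mm k x + 1) \<le> cc"
    by (rule gen) (use w l Bp1 in \<open>auto simp: mm_def K0_def Bq_def abs_le_iff\<close>)
qed

definition "LK7 = (\<lambda>k. [recn (\<lambda>x. pp k x - 1), recn (pp k), recn (\<lambda>x. mm k x - 1), recn (mm k), car Bp (ll k)])"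
definition "G7 = [car 1 tw]"
definition "T7 = {} \<union> (\<Union>k\<in>KK. set (LK7 k)) \<union> set G7"

lemma l6pp: "k \<le> d \<Longrightarrow> linc X T6 (pp k)"
proof -
  assume k: "k \<le> d"
  have "linc X T6 (\<lambda>x. \<omega> k x + ll k x + K0)" using l6\<omega>[OF k] l6ll[OF k] by (intro linc.add linc.const)
  then show ?thesis by (rule linc_cong') (simp add: pp_def)
qed
lemma l6mm: "k \<le> d \<Longrightarrow> linc X T6 (mm k)"
proof -
  assume k: "k \<le> d"
  have "linc X T6 (\<lambda>x. \<omega> k x - ll k x + K0)" using l6\<omega>[OF k] l6ll[OF k] by (intro linc.add linc_diff linc.const)
  then show ?thesis by (rule linc_cong') (simp add: mm_def)
qed

lemma r7: "reach N X 7 T7"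
proof (rule reach_step'[OF r6])
  have c2: "card (\<Union>k\<in>KK. set (LK7 k)) \<le> 5 * card KK" by (rule card_UN_list) (auto simp: finKK LK7_def)
  have c3: "card (set G7) \<le> 1" by (simp add: G7_def)
  have "card T7 \<le> 0 + 5 * card KK + 1" "finite T7" unfolding T7_def
    by (rule card3; use c2 c3 finKK in auto)+
  then show "finite T7" "card T7 \<le> N" using card_le_N[OF d1 NN, of 0 5 1] finKK by auto
  show "\<forall>f\<in>T7. nrn X T6 f"
    unfolding T7_def ball_Un
  proof (intro conjI)
    show "\<forall>f\<in>{}. nrn X T6 f" by simp
    show "\<forall>f\<in>(\<Union>k\<in>KK. set (LK7 k)). nrn X T6 f"
    proof (rule allK)
      fix k assume "k \<in> KK"
      then have k: "k \<le> d" by (simp add: KKd)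
      have "linc X T6 (\<lambda>x. pp k x - 1)" "linc X T6 (\<lambda>x. mm k x - 1)"
        using l6pp[OF k] l6mm[OF k] by (auto intro: linc_diff linc.const)
      then show "\<forall>f\<in>set (LK7 k). nrn X T6 f" unfolding LK7_def using l6pp[OF k] l6mm[OF k] l6ll[OF k]
        by (auto intro: nrn_recn nrn_car)
    qed
    show "\<forall>f\<in>set G7. nrn X T6 f" unfolding G7_def using l6tw by (auto intro: nrn_car)
  qed
qed simp

lemma memK7: "k \<le> d \<Longrightarrow> f \<in> set (LK7 k) \<Longrightarrow> f \<in> T7"
  unfolding T7_def by (intro UnI1 UnI2 memK) (auto simp: KKd)
lemma memG7: "f \<in> set G7 \<Longrightarrow> f \<in> T7"
  unfolding T7_def by (intro UnI2)

lemma l7ll: "k \<le> d \<Longrightarrow> linc X T7 (ll k)"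
  by (rule lin_car[of Bp]) (use Bp1 llb in \<open>auto intro: memK7 simp: LK7_def\<close>)
lemma l7tw: "linc X T7 tw"
  by (rule lin_car[of 1]) (auto intro: memG7 simp: G7_def twb1)

lemma l7D: assumes k: "k \<le> d"
  shows "linc X T7 (\<lambda>x. cc * (1 / pp k x - 1 / (pp k x + 1)) - 1)"
    "linc X T7 (\<lambda>x. cc * (1 / mm k x - 1 / (mm k x + 1)) - 1)"
proof -
  have a: "linc X T7 (\<lambda>x. 1 / ((pp k x - 1) + 1))"
    by (rule lin_recn) (use pmb in \<open>auto intro: memK7[OF k] simp: LK7_def\<close>)
  have b: "linc X T7 (\<lambda>x. 1 / (pp k x + 1))"
    by (rule lin_recn) (use pmb in \<open>auto intro: memK7[OF k] simp: LK7_def order_trans[OF zero_le_one]\<close>)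
  have "linc X T7 (\<lambda>x. cc * (1 / ((pp k x - 1) + 1) - 1 / (pp k x + 1)) - 1)"
    using a b by (intro linc_diff linc.scale linc.const)
  then show "linc X T7 (\<lambda>x. cc * (1 / pp k x - 1 / (pp k x + 1)) - 1)" by (rule linc_cong') simp
  have a: "linc X T7 (\<lambda>x. 1 / ((mm k x - 1) + 1))"
    by (rule lin_recn) (use pmb in \<open>auto intro: memK7[OF k] simp: LK7_def\<close>)
  have b: "linc X T7 (\<lambda>x. 1 / (mm k x + 1))"
    by (rule lin_recn) (use pmb in \<open>auto intro: memK7[OF k] simp: LK7_def order_trans[OF zero_le_one]\<close>)
  have "linc X T7 (\<lambda>x. cc * (1 / ((mm k x - 1) + 1) - 1 / (mm k x + 1)) - 1)"
    using a b by (intro linc_diff linc.scale linc.const)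
  then show "linc X T7 (\<lambda>x. cc * (1 / mm k x - 1 / (mm k x + 1)) - 1)" by (rule linc_cong') simp
qed

definition "LK8 = (\<lambda>k. [recn (\<lambda>x. cc * (1 / pp k x - 1 / (pp k x + 1)) - 1),
   recn (\<lambda>x. cc * (1 / mm k x - 1 / (mm k x + 1)) - 1), car Bp (ll k)])"
definition "G8 = [car 1 tw]"
definition "T8 = {} \<union> (\<Union>k\<in>KK. set (LK8 k)) \<union> set G8"

lemma r8: "reach N X 8 T8"
proof (rule reach_step'[OF r7])
  have c2: "card (\<Union>k\<in>KK. set (LK8 k)) \<le> 3 * card KK" by (rule card_UN_list) (auto simp: finKK LK8_def)
  have c3: "card (set G8) \<le> 1" by (simp add: G8_def)
  have "card T8 \<le> 0 + 3 * card KK + 1" "finite T8" unfolding T8_def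
    by (rule card3; use c2 c3 finKK in auto)+
  then show "finite T8" "card T8 \<le> N" using card_le_N[OF d1 NN, of 0 3 1] finKK by auto
  show "\<forall>f\<in>T8. nrn X T7 f"
    unfolding T8_def ball_Un
  proof (intro conjI)
    show "\<forall>f\<in>{}. nrn X T7 f" by simp
    show "\<forall>f\<in>(\<Union>k\<in>KK. set (LK8 k)). nrn X T7 f"
    proof (rule allK)
      fix k assume "k \<in> KK"
      then have k: "k \<le> d" by (simp add: KKd)
      show "\<forall>f\<in>set (LK8 k). nrn X T7 f" unfolding LK8_def using l7D[OF k] l7ll[OF k]
        by (auto intro: nrn_recn nrn_car)
    qed
    show "\<forall>f\<in>set G8. nrn X T7 f" unfolding G8_def using l7tw by (auto intro: nrn_car)
  qed
qed simp

lemma memK8: "k \<le> d \<Longrightarrow> f \<in> set (LK8 k) \<Longrightarrow> f \<in> T8"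
  unfolding T8_def by (intro UnI1 UnI2 memK) (auto simp: KKd)
lemma memG8: "f \<in> set G8 \<Longrightarrow> f \<in> T8"
  unfolding T8_def by (intro UnI2)

lemma l8ll: "k \<le> d \<Longrightarrow> linc X T8 (ll k)"
  by (rule lin_car[of Bp]) (use Bp1 llb in \<open>auto intro: memK8 simp: LK8_def\<close>)
lemma l8tw: "linc X T8 tw"
  by (rule lin_car[of 1]) (auto intro: memG8 simp: G8_def twb1)

lemma l8prod: assumes k: "k \<le> d" shows "linc X T8 (\<lambda>x. \<omega> k x * ll k x)"
proof -
  have pa: "\<forall>x\<in>X. 1 \<le> pp k x \<and> pp k x * (pp k x + 1) \<le> cc" using pmb by blast
  have ma: "\<forall>x\<in>X. 1 \<le> mm k x \<and> mm k x * (mm k x + 1) \<le> cc" using pmb by blast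
  have p: "linc X T8 (\<lambda>x. pp k x * (pp k x + 1))"
  proof (rule pp_lin[OF pa])
    show "linc X T8 (\<lambda>x. 1 / ((cc * (1 / pp k x - 1 / (pp k x + 1)) - 1) + 1))"
      by (rule lin_recn) (use pp_nonneg[OF pa] in \<open>auto intro: memK8[OF k] simp: LK8_def\<close>)
  qed
  have m: "linc X T8 (\<lambda>x. mm k x * (mm k x + 1))"
  proof (rule pp_lin[OF ma])
    show "linc X T8 (\<lambda>x. 1 / ((cc * (1 / mm k x - 1 / (mm k x + 1)) - 1) + 1))"
      by (rule lin_recn) (use pp_nonneg[OF ma] in \<open>auto intro: memK8[OF k] simp: LK8_def\<close>)
  qed
  have "linc X T8 (\<lambda>x. (1/4) * (pp k x * (pp k x + 1)) + (- 1/4) * (mm k x * (mm k x + 1))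
      + (- 1/2 - K0) * ll k x)"
    using p m l8ll[OF k] by (intro linc.add linc.scale)
  moreover have "\<forall>x\<in>X. (1/4) * (pp k x * (pp k x + 1)) + (- 1/4) * (mm k x * (mm k x + 1))
      + (- 1/2 - K0) * ll k x = \<omega> k x * ll k x"
  proof
    fix x
    show "(1/4) * (pp k x * (pp k x + 1)) + (- 1/4) * (mm k x * (mm k x + 1))
      + (- 1/2 - K0) * ll k x = \<omega> k x * ll k x"
      unfolding pp_def mm_def by (simp add: algebra_simps)
  qed
  ultimately show ?thesis by (rule linc_cong')
qed

lemma l8V: "linc X T8 V"
proof -
  have "linc X T8 (\<lambda>x. \<Sum>k\<in>{..d}. \<omega> k x * ll k x)" by (intro linc_sum l8prod) auto
  then show ?thesis by (rule linc_cong') (simp add: V_def)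
qed

end


context NETL
begin

definition "Bv = real P + 1"
definition "K1 = 2 * Bv + 1"
definition "p2 = (\<lambda>x. tw x + V x + K1)"
definition "m2 = (\<lambda>x. tw x - V x + K1)"
definition "Bq2 = 4 * Bv + 1"
definition "cc2 = Bq2 * (Bq2 + 1)"

lemma Bv1: "Bv \<ge> 1" by (simp add: Bv_def)
lemma Vb1: "x \<in> X \<Longrightarrow> \<bar>V x\<bar> \<le> Bv" using Vb[of x] by (simp add: Bv_def)

lemma pmb2: "x \<in> X \<Longrightarrow> 1 \<le> p2 x \<and> p2 x * (p2 x + 1) \<le> cc2" "x \<in> X \<Longrightarrow> 1 \<le> m2 x \<and> m2 x * (m2 x + 1) \<le> cc2"
proof -
  assume x: "x \<in> X"
  have w: "\<bar>tw x\<bar> \<le> 1" using twb1[OF x] .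
  have l: "\<bar>V x\<bar> \<le> Bv" using Vb[OF x] by (simp add: Bv_def)
  have gen: "1 \<le> q \<and> q * (q + 1) \<le> cc2" if "1 \<le> q" "q \<le> Bq2" for q
  proof -
    have "q * (q + 1) \<le> Bq2 * (Bq2 + 1)" using that by (intro mult_mono) auto
    then show ?thesis using that by (simp add: cc2_def)
  qed
  show "1 \<le> p2 x \<and> p2 x * (p2 x + 1) \<le> cc2"
    by (rule gen) (use w l Bv1 in \<open>auto simp: p2_def K1_def Bq2_def abs_le_iff\<close>)
  show "1 \<le> m2 x \<and> m2 x * (m2 x + 1) \<le> cc2"
    by (rule gen) (use w l Bv1 in \<open>auto simp: m2_def K1_def Bq2_def abs_le_iff\<close>)
qed

definition "G9 = [recn (\<lambda>x. p2 x - 1), recn p2, recn (\<lambda>x. m2 x - 1), recn m2, car Bv V]"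
definition "T9 = set G9"

lemma r9: "reach N X 9 T9"
proof (rule reach_step'[OF r8])
  show "finite T9" by (simp add: T9_def)
  have "card T9 \<le> 5" unfolding T9_def G9_def by (rule order_trans[OF card_length]) simp
  then show "card T9 \<le> N" using card_le_N[OF d1 NN, of 0 0 5] by auto
  have a: "linc X T8 p2" "linc X T8 m2"
    using l8tw l8V by (auto simp: p2_def m2_def intro!: linc.add linc_diff linc.const)
  then have b: "linc X T8 (\<lambda>x. p2 x - 1)" "linc X T8 (\<lambda>x. m2 x - 1)"
    by (auto intro: linc_diff linc.const)
  show "\<forall>f\<in>T9. nrn X T8 f" unfolding T9_def G9_def using a b l8V
    by (auto intro: nrn_recn nrn_car)
qed simp

lemma l9D:
  shows "linc X T9 (\<lambda>x. cc2 * (1 / p2 x - 1 / (p2 x + 1)) - 1)"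
    "linc X T9 (\<lambda>x. cc2 * (1 / m2 x - 1 / (m2 x + 1)) - 1)"
proof -
  have a: "linc X T9 (\<lambda>x. 1 / ((p2 x - 1) + 1))"
    by (rule lin_recn) (use pmb2 in \<open>auto simp: T9_def G9_def\<close>)
  have b: "linc X T9 (\<lambda>x. 1 / (p2 x + 1))"
  proof (rule lin_recn)
    show "recn p2 \<in> T9" by (simp add: T9_def G9_def)
    show "\<forall>x\<in>X. 0 \<le> p2 x" using pmb2 by force
  qed
  have "linc X T9 (\<lambda>x. cc2 * (1 / ((p2 x - 1) + 1) - 1 / (p2 x + 1)) - 1)"
    using a b by (intro linc_diff linc.scale linc.const)
  then show "linc X T9 (\<lambda>x. cc2 * (1 / p2 x - 1 / (p2 x + 1)) - 1)" by (rule linc_cong') simp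
  have a: "linc X T9 (\<lambda>x. 1 / ((m2 x - 1) + 1))"
    by (rule lin_recn) (use pmb2 in \<open>auto simp: T9_def G9_def\<close>)
  have b: "linc X T9 (\<lambda>x. 1 / (m2 x + 1))"
  proof (rule lin_recn)
    show "recn m2 \<in> T9" by (simp add: T9_def G9_def)
    show "\<forall>x\<in>X. 0 \<le> m2 x" using pmb2 by force
  qed
  have "linc X T9 (\<lambda>x. cc2 * (1 / ((m2 x - 1) + 1) - 1 / (m2 x + 1)) - 1)"
    using a b by (intro linc_diff linc.scale linc.const)
  then show "linc X T9 (\<lambda>x. cc2 * (1 / m2 x - 1 / (m2 x + 1)) - 1)" by (rule linc_cong') simp
qed

lemma l9V: "linc X T9 V"
  by (rule lin_car[of Bv]) (use Bv1 Vb1 in \<open>auto simp: T9_def G9_def\<close>)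

definition "G10 = [recn (\<lambda>x. cc2 * (1 / p2 x - 1 / (p2 x + 1)) - 1), recn (\<lambda>x. cc2 * (1 / m2 x - 1 / (m2 x + 1)) - 1), car Bv V]"
definition "T10 = set G10"

lemma r10: "reach N X 10 T10"
proof (rule reach_step'[OF r9])
  show "finite T10" by (simp add: T10_def)
  have "card T10 \<le> 3" unfolding T10_def G10_def by (rule order_trans[OF card_length]) simp
  then show "card T10 \<le> N" using card_le_N[OF d1 NN, of 0 0 3] by auto
  show "\<forall>f\<in>T10. nrn X T9 f" unfolding T10_def G10_def using l9D l9V
    by (auto intro: nrn_recn nrn_car)
qed simp

lemma l10V: "linc X T10 V"
  by (rule lin_car[of Bv]) (use Bv1 Vb1 in \<open>auto simp: T10_def G10_def\<close>)

lemma l10prod: "linc X T10 (\<lambda>x. tw x * V x)"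
proof -
  have pa: "\<forall>x\<in>X. 1 \<le> p2 x \<and> p2 x * (p2 x + 1) \<le> cc2" using pmb2 by blast
  have ma: "\<forall>x\<in>X. 1 \<le> m2 x \<and> m2 x * (m2 x + 1) \<le> cc2" using pmb2 by blast
  have p: "linc X T10 (\<lambda>x. p2 x * (p2 x + 1))"
  proof (rule pp_lin[OF pa])
    show "linc X T10 (\<lambda>x. 1 / ((cc2 * (1 / p2 x - 1 / (p2 x + 1)) - 1) + 1))"
      by (rule lin_recn) (use pp_nonneg[OF pa] in \<open>auto simp: T10_def G10_def\<close>)
  qed
  have m: "linc X T10 (\<lambda>x. m2 x * (m2 x + 1))"
  proof (rule pp_lin[OF ma])
    show "linc X T10 (\<lambda>x. 1 / ((cc2 * (1 / m2 x - 1 / (m2 x + 1)) - 1) + 1))"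
      by (rule lin_recn) (use pp_nonneg[OF ma] in \<open>auto simp: T10_def G10_def\<close>)
  qed
  have "linc X T10 (\<lambda>x. (1/4) * (p2 x * (p2 x + 1)) + (- 1/4) * (m2 x * (m2 x + 1))
      + (- 1/2 - K1) * V x)"
    using p m l10V by (intro linc.add linc.scale)
  moreover have "\<forall>x\<in>X. (1/4) * (p2 x * (p2 x + 1)) + (- 1/4) * (m2 x * (m2 x + 1))
      + (- 1/2 - K1) * V x = tw x * V x"
  proof
    fix x
    show "(1/4) * (p2 x * (p2 x + 1)) + (- 1/4) * (m2 x * (m2 x + 1))
      + (- 1/2 - K1) * V x = tw x * V x"
      unfolding p2_def m2_def by (simp add: algebra_simps)
  qed
  ultimately show ?thesis by (rule linc_cong')
qed

lemma l10out: "linc X T10 out"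
proof -
  have "linc X T10 (\<lambda>x. (1 / (\<tau> * q')) * (tw x * V x) + (- O' / q'))" using l10prod by (rule linc_affine)
  moreover have "\<forall>x\<in>X. (1 / (\<tau> * q')) * (tw x * V x) + (- O' / q') = out x"
  proof
    fix x assume x: "x \<in> X"
    have "(1 / (\<tau> * q')) * (tw x * V x) = vv x / q'" using twV[OF x] \<tau> by simp
    then show "(1 / (\<tau> * q')) * (tw x * V x) + (- O' / q') = out x" using outd x by (simp add: diff_divide_distrib)
  qed
  ultimately show ?thesis by (rule linc_cong')
qed

theorem net_result: "restrict out X \<in> restr_set (H N L) X"
proof -
  define Bo where "Bo = (real P + \<bar>O'\<bar>) / \<bar>q'\<bar> + 1"
  have Bo: "Bo > 0" by (simp add: Bo_def add_nonneg_pos)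
  have ob: "\<forall>x\<in>X. \<bar>out x\<bar> \<le> Bo"
  proof
    fix x assume x: "x \<in> X"
    have "\<bar>vv x - O'\<bar> \<le> real P + \<bar>O'\<bar>" using vvb x by (auto simp: abs_le_iff)
    then have "\<bar>vv x - O'\<bar> / \<bar>q'\<bar> \<le> (real P + \<bar>O'\<bar>) / \<bar>q'\<bar>" by (intro divide_right_mono) auto
    then show "\<bar>out x\<bar> \<le> Bo" using outd x by (simp add: Bo_def abs_divide)
  qed
  have N1: "N \<ge> 1" using card_le_N[OF d1 NN, of 0 0 1] by simp
  have "reach N X (L - 1) {car Bo out}"
    by (rule reach_pad[OF r10 l10out Bo ob N1]) (use LL in simp)
  moreover have "linc X {car Bo out} out" by (rule lin_car[OF _ Bo ob]) simp
  ultimately show ?thesis by (rule reach_final)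
qed

end


theorem corollary5:
  fixes Es :: "nat \<Rightarrow> (real^'d) set" and J N L :: nat
  assumes "J \<ge> 1"
    and "\<And>i j. i < J \<Longrightarrow> j < J \<Longrightarrow> i \<noteq> j \<Longrightarrow> Es i \<inter> Es j = {}"
    and "\<And>j. j < J \<Longrightarrow> bounded (Es j) \<and> closed (Es j)"
    and "N \<ge> 36 * CARD('d) * (2 * CARD('d) + 1)"
    and "L \<ge> 12"
  shows "restr_set (C Es J) (\<Union>j<J. Es j) \<subseteq> restr_set (H N L) (\<Union>j<J. Es j)"
proof
  note J1 = assms(1) and dis = assms(2) and bc = assms(3) and NN = assms(4) and LL = assms(5)
  define E where "E = (\<Union>j<J. Es j)"
  fix FF assume "FF \<in> restr_set (C Es J) (\<Union>j<J. Es j)"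
  then obtain r where r: "\<forall>j<J. r j \<in> \<rat>" and FF: "FF = restrict (\<lambda>x. \<Sum>j<J. r j * indicator (Es j) x) E"
    unfolding restr_set_def C_def E_def by blast
  define d where "d = CARD('d)"
  have d1: "d \<ge> 1" unfolding d_def using finite_UNIV_card_ge_0[where 'a='d] by simp
  obtain \<xi> :: "nat \<Rightarrow> 'd" where \<xi>: "bij_betw \<xi> {0..<d} UNIV"
    using ex_bij_betw_nat_finite[of "UNIV :: 'd set"] unfolding d_def by auto
  have \<xi>s: "\<exists>m<d. \<xi> m = i" for i
  proof -
    have "i \<in> \<xi> ` {0..<d}" using \<xi> unfolding bij_betw_def by simp
    then show ?thesis by auto
  qed
  obtain \<delta> where \<delta>: "\<delta> > 0" "\<forall>i<J. \<forall>j<J. i \<noteq> j \<longrightarrow> (\<forall>x\<in>Es i. \<forall>y\<in>Es j. \<delta> \<le> dist x y)"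
    using separation[of J Es] J1 dis bc by (auto simp: compact_eq_bounded_closed)
  have "bounded E" unfolding E_def using bc by auto
  then obtain Rb where Rb: "\<forall>x\<in>E. norm x \<le> Rb" unfolding bounded_iff by blast
  define R0 where "R0 = max Rb 0"
  have R0: "\<forall>x\<in>E. \<forall>i. \<bar>x $ i\<bar> \<le> R0" "R0 \<ge> 0"
  proof -
    show "R0 \<ge> 0" by (simp add: R0_def)
    show "\<forall>x\<in>E. \<forall>i. \<bar>x $ i\<bar> \<le> R0"
    proof (intro ballI allI)
      fix x i assume "x \<in> E"
      then have "norm x \<le> Rb" using Rb by blast
      moreover have "\<bar>x $ i\<bar> \<le> norm x" by (rule component_le_norm_cart)
      ultimately show "\<bar>x $ i\<bar> \<le> R0" unfolding R0_def by linarith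
    qed
  qed
  define hh where "hh = \<delta> / real d"
  have hh: "hh > 0" "real d * hh = \<delta>" using \<delta> d1 by (auto simp: hh_def)
  define U0 :: nat where "U0 = nat \<lceil>R0 / hh\<rceil> + 2"
  have U0: "\<forall>x\<in>E. \<forall>i. \<bar>x $ i / hh\<bar> \<le> real U0 - 2"
  proof (intro ballI allI)
    fix x i assume "x \<in> E"
    then have "\<bar>x $ i\<bar> / hh \<le> R0 / hh" using R0 hh by (intro divide_right_mono) auto
    also have "\<dots> \<le> real (nat \<lceil>R0 / hh\<rceil>)" by linarith
    finally show "\<bar>x $ i / hh\<bar> \<le> real U0 - 2" using hh by (simp add: U0_def abs_divide)
  qed
  define u where "u = (\<lambda>m k (x::real^'d). x $ \<xi> m / hh + real U0 + real k / (real d + 1))"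
  have ub: "2 \<le> u m k x" "u m k x \<le> 2 * real U0" if "x \<in> E" "k \<le> d" for m k x
  proof -
    have "real k / (real d + 1) \<le> 1" "0 \<le> real k / (real d + 1)" using that by auto
    moreover have "\<bar>x $ \<xi> m / hh\<bar> \<le> real U0 - 2" using U0 that(1) by blast
    ultimately show "2 \<le> u m k x" "u m k x \<le> 2 * real U0" unfolding u_def abs_le_iff by linarith+
  qed
  define Ms where "Ms = real d + 1"
  define \<tau> where "\<tau> = 1 / (4 * (real d + 1))"
  define a where "a = 1/2 - 1 / (2 * (real d + 1))"
  define M :: nat where "M = 2 * U0 + d + 4"
  define codeof where "codeof = (\<lambda>k x. (\<Sum>m<d. nat (rnd (u m k x)) * M ^ m) + k * M ^ d)"
  define Cn where "Cn = M ^ Suc d"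
  have rnd_b: "2 \<le> rnd (u m k x)" "nat (rnd (u m k x)) < M" if "x \<in> E" "k \<le> d" for m k x
    using ub[OF that, of m] rnd_bounds[of "u m k x"] unfolding M_def by linarith+
  have digit_eq: "codeof k x = (\<Sum>m<Suc d. (if m < d then nat (rnd (u m k x)) else k) * M ^ m)" for k x
    unfolding codeof_def by simp
  have code_lt: "codeof k x < Cn" if "x \<in> E" "k \<le> d" for k x
    unfolding digit_eq Cn_def by (rule digits_bound) (use rnd_b[OF that] that in \<open>auto simp: M_def\<close>)
  have code_inj: "k = k' \<and> (\<forall>m<d. rnd (u m k x) = rnd (u m k' y))"
    if "x \<in> E" "y \<in> E" "k \<le> d" "k' \<le> d" "codeof k x = codeof k' y" for k k' x y
  proof -
    have "\<forall>m<Suc d. (if m < d then nat (rnd (u m k x)) else k) = (if m < d then nat (rnd (u m k' y)) else k')"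
    proof (rule digits_inj)
      show "\<forall>m<Suc d. (if m < d then nat (rnd (u m k x)) else k) < M"
        using rnd_b[OF that(1,3)] that by (auto simp: M_def)
      show "\<forall>m<Suc d. (if m < d then nat (rnd (u m k' y)) else k') < M"
        using rnd_b[OF that(2,4)] that by (auto simp: M_def)
      show "(\<Sum>m<Suc d. (if m < d then nat (rnd (u m k x)) else k) * M ^ m) =
          (\<Sum>m<Suc d. (if m < d then nat (rnd (u m k' y)) else k') * M ^ m)"
        by (metis digit_eq that(5))
    qed
    then have D: "\<And>m. m < Suc d \<Longrightarrow> (if m < d then nat (rnd (u m k x)) else k) = (if m < d then nat (rnd (u m k' y)) else k')"
      by blast
    have "k = k'" using D[of d] by simp
    moreover have "rnd (u m k x) = rnd (u m k' y)" if "m < d" for m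
    proof -
      have "nat (rnd (u m k x)) = nat (rnd (u m k' y))" using D[of m] that by simp
      moreover have "2 \<le> rnd (u m k x)" "2 \<le> rnd (u m k' y)"
        using rnd_b(1)[OF \<open>x \<in> E\<close> \<open>k \<le> d\<close>] rnd_b(1)[OF \<open>y \<in> E\<close> \<open>k' \<le> d\<close>] by auto
      ultimately show ?thesis by simp
    qed
    ultimately show ?thesis by blast
  qed
  have close: "dist x y < \<delta>" if "x \<in> E" "y \<in> E" "\<forall>m<d. rnd (u m k x) = rnd (u m k y)" for k x y
  proof -
    have c: "\<bar>x $ i - y $ i\<bar> < hh" for i
    proof -
      obtain m where m: "m < d" "\<xi> m = i" using \<xi>s by blast
      have e: "rnd (u m k x) = rnd (u m k y)" using that(3) m by blast
      have "\<bar>u m k x - u m k y\<bar> < 1"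
        using rnd_bounds[of "u m k x"] rnd_bounds[of "u m k y"] unfolding e abs_less_iff by linarith
      then have "\<bar>x $ i / hh - y $ i / hh\<bar> < 1" using m by (simp add: u_def)
      then have "\<bar>x $ i - y $ i\<bar> / hh < 1" using hh by (simp add: diff_divide_distrib[symmetric] abs_divide)
      then show ?thesis using hh by (simp add: divide_less_eq)
    qed
    have "dist x y = norm (x - y)" by (simp add: dist_norm)
    also have "\<dots> \<le> (\<Sum>i\<in>UNIV. \<bar>(x - y) $ i\<bar>)" by (rule norm_le_l1_cart)
    also have "\<dots> < (\<Sum>i\<in>(UNIV::'d set). hh)"
      by (rule sum_strict_mono) (use c in simp_all)
    also have "\<dots> = \<delta>" using hh by (simp add: d_def)
    finally show ?thesis .
  qed
  obtain q :: nat where q: "q > 0" "\<forall>j<J. real q * r j \<in> \<int>" using common_denom[OF r] by blast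
  define zi where "zi = (\<lambda>j. \<lfloor>real q * r j\<rfloor>)"
  have zi: "real_of_int (zi j) = real q * r j" if "j < J" for j
  proof -
    have "real q * r j \<in> \<int>" using q(2) that by blast
    then obtain n where n: "real q * r j = of_int n" by (erule Ints_cases)
    then show ?thesis unfolding zi_def by simp
  qed
  define Oo where "Oo = (\<Sum>j<J. \<bar>zi j\<bar>)"
  have Oo: "\<bar>zi j\<bar> \<le> Oo" if "j < J" for j
    unfolding Oo_def using that by (intro member_le_sum) auto
  define val where "val = (\<lambda>j. nat (zi j + Oo))"
  define P where "P = nat (2 * Oo) + 1"
  have valb: "val j \<le> P" "real (val j) = real_of_int (zi j) + real_of_int Oo" if "j < J" for j
  proof -
    have a: "\<bar>zi j\<bar> \<le> Oo" by (rule Oo[OF that])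
    then have b: "0 \<le> zi j + Oo" "zi j + Oo \<le> 2 * Oo" by (simp_all add: abs_le_iff)
    show "val j \<le> P" unfolding val_def P_def using b by linarith
    show "real (val j) = real_of_int (zi j) + real_of_int Oo" unfolding val_def using b(1) by simp
  qed
  define isc where "isc = (\<lambda>c j. j < J \<and> (\<exists>y\<in>Es j. \<exists>k\<le>d. c = codeof k y))"
  define lab where "lab = (\<lambda>c. if \<exists>j. isc c j then val (SOME j. isc c j) else 0)"
  have labb: "\<forall>c<Cn. lab c \<le> P"
  proof (intro allI impI)
    fix c
    show "lab c \<le> P"
    proof (cases "\<exists>j. isc c j")
      case True
      then have "isc c (SOME j. isc c j)" by (rule someI_ex)
      then have "(SOME j. isc c j) < J" by (simp add: isc_def)
      then have "val (SOME j. isc c j) \<le> P" by (rule valb(1))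
      moreover have "lab c = val (SOME j. isc c j)" using True unfolding lab_def by (simp only: if_True)
      ultimately show ?thesis by simp
    next
      case False
      then have "lab c = 0" unfolding lab_def by (simp only: if_False)
      then show ?thesis by simp
    qed
  qed
  have lab_ok: "lab (codeof k x) = val j" if jj: "j < J" "x \<in> Es j" "k \<le> d" for j k x
  proof -
    have xE: "x \<in> E" using jj unfolding E_def by blast
    have i: "isc (codeof k x) j" using jj unfolding isc_def by blast
    have "j' = j" if Hj: "isc (codeof k x) j'" for j'
    proof -
      obtain y k' where y: "j' < J" "y \<in> Es j'" "k' \<le> d" "codeof k x = codeof k' y"
        using Hj unfolding isc_def by blast
      have yE: "y \<in> E" using y unfolding E_def by blast
      have "k = k' \<and> (\<forall>m<d. rnd (u m k x) = rnd (u m k' y))"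
        by (rule code_inj[OF xE yE jj(3) y(3) y(4)])
      then have kk: "k' = k" and H: "\<forall>m<d. rnd (u m k x) = rnd (u m k' y)" by auto
      from H have "\<forall>m<d. rnd (u m k x) = rnd (u m k y)" unfolding kk .
      then have dxy: "dist x y < \<delta>" by (rule close[OF xE yE])
      show "j' = j"
      proof (rule ccontr)
        assume "j' \<noteq> j"
        then have "\<forall>x\<in>Es j. \<forall>y\<in>Es j'. \<delta> \<le> dist x y" using \<delta>(2) y(1) jj(1) by simp
        then have "\<delta> \<le> dist x y" using y(2) jj(2) by simp
        then show False using dxy by simp
      qed
    qed
    then have "(SOME j. isc (codeof k x) j) = j" using i by (rule some_equality[rotated])
    then show ?thesis using i unfolding lab_def by auto
  qed
  have P0: "P > 0" by (simp add: P_def)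
  obtain \<gamma> t where \<gamma>t: "1 < \<gamma>" "\<gamma> < 2"
    "\<forall>c<Cn. \<bar>real P * sigma1 (t / (real c + \<gamma>)) - real (lab c)\<bar> \<le> 1/4"
    using fit[OF P0 labb] by blast
  define vv where "vv = (\<lambda>x. \<Sum>j<J. real (val j) * indicator (Es j) x)"
  define out where "out = (\<lambda>x. (vv x - real_of_int Oo) / real q)"
  have ind: "(indicator (Es j') x :: real) = (if j' = j then 1 else 0)" if "j < J" "x \<in> Es j" "j' < J" for j j' :: nat and x :: "real^'d"
  proof (cases "j' = j")
    case False
    then have "x \<notin> Es j'" using dis[of j j'] that by blast
    then show ?thesis using False by simp
  qed (use that in simp)
  have vvj: "vv x = real (val j)" if jx: "j < J" "x \<in> Es j" for j x
  proof -
    have "vv x = (\<Sum>j'<J. if j' = j then real (val j) else 0)"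
      unfolding vv_def
    proof (rule sum.cong[OF refl])
      fix j' assume "j' \<in> {..<J}"
      then have "indicator (Es j') x = (if j' = j then 1 else (0::real))" using ind[OF jx] by simp
      then show "real (val j') * indicator (Es j') x = (if j' = j then real (val j) else 0)" by simp
    qed
    also have "\<dots> = real (val j)" using that(1) by simp
    finally show ?thesis .
  qed
  have Ej: "\<exists>j<J. x \<in> Es j" if "x \<in> E" for x using that unfolding E_def by blast
  have sem: "\<forall>x\<in>E. \<forall>k\<le>d. omg d u k x * ellf d M u t \<gamma> P k x = omg d u k x * vv x"
  proof (intro ballI allI impI)
    fix x k assume x: "x \<in> E" and k: "k \<le> d"
    obtain j where j: "j < J" "x \<in> Es j" using Ej[OF x] by blast
    show "omg d u k x * ellf d M u t \<gamma> P k x = omg d u k x * vv x"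
    proof (cases "omg d u k x = 0")
      case False
      then have "Zf d u k x > 0" by (simp add: omg_def max_def split: if_splits)
      then have sb: "(\<Sum>m<d. beta d u m k x) < tau d" by (simp add: Zf_def)
      have Sq_ok: "Sq (real d + 1) (u m k x) = of_int (rnd (u m k x))" if m: "m < d" for m
      proof -
        have "beta d u m k x \<le> (\<Sum>m<d. beta d u m k x)"
          by (rule member_le_sum) (use m in \<open>simp_all add: beta_def\<close>)
        then have "gq (u m k x) / 2 - aa d < tau d" using sb by (simp add: beta_def)
        then have "\<bar>u m k x - of_int (rnd (u m k x))\<bar> < aa d + tau d" by (simp add: gq_eq)
        moreover have "aa d + tau d = 1/2 - 1 / (4 * (real d + 1))"
        proof -
          have pos: "real d + 1 \<noteq> 0" by simp
          have "1 / (2 * (real d + 1)) = 2 * (1 / (4 * (real d + 1)))" using pos by (simp add: field_simps)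
          then show ?thesis unfolding aa_def tau_def by (simp only:)
        qed
        ultimately have "\<bar>u m k x - of_int (rnd (u m k x))\<bar> \<le> 1/2 - 1 / (4 * (real d + 1))" by simp
        then show ?thesis by (intro Sq_exact) auto
      qed
      have cr: "crf d M u k x = real (codeof k x)"
      proof -
        have "(\<Sum>m<d. Sq (real d + 1) (u m k x) * real M ^ m) = (\<Sum>m<d. real (nat (rnd (u m k x))) * real M ^ m)"
        proof (rule sum.cong)
          fix m assume "m \<in> {..<d}"
          then have "Sq (real d + 1) (u m k x) = of_int (rnd (u m k x))" "2 \<le> rnd (u m k x)"
            using Sq_ok rnd_b(1)[OF x k] by auto
          then show "Sq (real d + 1) (u m k x) * real M ^ m = real (nat (rnd (u m k x))) * real M ^ m" by simp
        qed simp
        then have "crf d M u k x = (\<Sum>m<d. real (nat (rnd (u m k x))) * real M ^ m) + real k * real M ^ d"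
          unfolding crf_def by simp
        then show ?thesis by (simp add: codeof_def)
      qed
      have c: "codeof k x < Cn" by (rule code_lt[OF x k])
      have "\<bar>real P * sigma1 (t / (real (codeof k x) + \<gamma>)) - real (lab (codeof k x))\<bar> \<le> 1/4"
        using \<gamma>t(3) c by blast
      then have "\<bar>real P * sigma1 (t / (real (codeof k x) + \<gamma>)) - real (val j)\<bar> \<le> 1/4"
        by (simp only: lab_ok[OF j k])
      then have "\<bar>real P * Gf d M u t \<gamma> k x - of_int (int (val j))\<bar> \<le> 1/4" by (simp add: Gf_def cr)
      then have "ellf d M u t \<gamma> P k x = of_int (int (val j))" unfolding ellf_def by (rule round_exact)
      then show ?thesis using vvj[OF j] by simp
    qed simp
  qed
  have vvb: "\<forall>x\<in>E. 0 \<le> vv x \<and> vv x \<le> real P"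
  proof
    fix x assume "x \<in> E"
    then obtain j where j: "j < J" "x \<in> Es j" using Ej by blast
    then show "0 \<le> vv x \<and> vv x \<le> real P" using vvj[OF j] valb(1)[OF j(1)] by simp
  qed
  have outd: "\<forall>x\<in>E. out x = (vv x - real_of_int Oo) / real q" by (simp add: out_def)
  interpret N: NETL E \<xi> u vv out P M d N L hh "real U0" "2 * real U0" \<gamma> t "real_of_int Oo" "real q"
  proof
    show "1 \<le> d" by (rule d1)
    show "36 * d * (2 * d + 1) \<le> N" using NN by (simp add: d_def)
    show "12 \<le> L" by (rule LL)
    show "u = (\<lambda>m k x. x $ \<xi> m / hh + real U0 + real k / (real d + 1))" by (simp add: u_def)
    show "\<forall>x\<in>E. \<forall>m k. k \<le> d \<longrightarrow> 2 \<le> u m k x \<and> u m k x \<le> 2 * real U0" using ub by blast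
    show "2 \<le> 2 * real U0" by (simp add: U0_def)
    show "0 < P" by (rule P0)
    show "1 < \<gamma>" by (rule \<gamma>t(1))
    show "\<forall>x\<in>E. \<forall>k\<le>d. omg d u k x * ellf d M u t \<gamma> P k x = omg d u k x * vv x" by (rule sem)
    show "\<forall>x\<in>E. 0 \<le> vv x \<and> vv x \<le> real P" by (rule vvb)
    show "\<forall>x\<in>E. out x = (vv x - real_of_int Oo) / real q" by (rule outd)
  qed
  have res: "restrict out E \<in> restr_set (H N L) E" by (rule N.net_result)
  have "restrict out E = FF"
  proof -
    have "out x = (\<Sum>j<J. r j * indicator (Es j) x)" if xE: "x \<in> E" for x
    proof -
      obtain j where j: "j < J" "x \<in> Es j" using Ej[OF xE] by blast
      have "(\<Sum>j'<J. r j' * indicator (Es j') x) = (\<Sum>j'<J. if j' = j then r j else 0)"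
      proof (rule sum.cong[OF refl])
        fix j' assume "j' \<in> {..<J}"
        then have "indicator (Es j') x = (if j' = j then 1 else (0::real))" using ind[OF j] by simp
        then show "r j' * indicator (Es j') x = (if j' = j then r j else 0)" by simp
      qed
      also have "\<dots> = r j" using j(1) by simp
      finally have "(\<Sum>j'<J. r j' * indicator (Es j') x) = r j" .
      moreover have "out x = r j" using vvj[OF j] valb(2)[OF j(1)] zi[OF j(1)] q(1) by (simp add: out_def)
      ultimately show ?thesis by simp
    qed
    then show ?thesis unfolding FF by (auto simp: restrict_def)
  qed
  then show "FF \<in> restr_set (H N L) (\<Union>j<J. Es j)" using res by (simp add: E_def)
qed


end
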